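(* Let $\mathfrak{G}$ be a right-angled graph of groups, $\omega$ a vertex and $\mathfrak{X}=\mathfrak{X}(\mathfrak{G},\omega)$. Let $e,f$ be two edges of $\mathfrak{X}$ labelled by factors $A$ and $B$ respectively, where $A$ is a factor of $G_u$ and $B$ a factor of $G_v$. If $e$ and $f$ belong to the same hyperplane, then there exists an oriented path $\gamma$ in the underlying abstract graph of $\mathfrak{G}$ from $u$ to $v$ such that $\varphi_\gamma(A)=B$.
   Context: An abstract graph consists of a set $V$ of vertices, a set $E$ of arrows, a fixed-point-free involution $e\mapsto\bar e$ on $E$, and maps $s,t:E\to V$ with $t(e)=s(\bar e)$; it is assumed connected. A right-angled graph of groups $\mathfrak{G}$ consists of an abstract graph, for each $v\in V$ a group $G_v$ with a fixed decomposition as a graph product $\Gamma_v\mathcal{G}_v$ (over a simplicial graph $\Gamma_v$ with non-trivial vertex-groups), for each $e\in E$ a group $G_e=G_{\bar e}$ with a fixed decomposition as a graph product, and monomorphisms $\iota_e:G_e\hookrightarrow G_{s(e)}$ which are graphical embeddings: there is an embedding $f$ of the graph of $G_e$ onto an induced subgraph of $\Gamma_{s(e)}$ such that $\iota_e$ restricts to an isomorphism from each vertex-group of $G_e$ onto the vertex-group of $G_{s(e)}$ indexed by the image under $f$ of its vertex. The factors of $G_v$ are the vertex-groups of its fixed graph product decomposition. The fundamental groupoid $\mathfrak{F}$ is the groupoid with object set $V$ generated by the arrows $e\in E$ (morphisms from $s(e)$ to $t(e)$) and the elements of each $G_v$ (morphisms from $v$ to $v$), subject to the relations of each $G_v$,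 $\bar e=e^{-1}$, and $\iota_e(g)\cdot e=e\cdot\iota_{\bar e}(g)$ for $e\in E$, $g\in G_e$. Products are written left to right; the terminus of a morphism is its terminal object. The graph $\mathfrak{X}(\mathfrak{G},\omega)$ has as vertices the morphisms of $\mathfrak{F}$ with initial object $\omega$, two vertices $g,h$ being adjacent iff $h=gs$ where $s$ is either an arrow or a non-trivial element of some factor; such an edge is labelled by that arrow or by the factor containing $s$. It is a quasi-median graph. Hyperplanes are equivalence classes of edges for the transitive closure of "lie in a common triangle or are opposite sides of an induced 4-cycle". For an arrow $e$ and a factor $A$ of $G_{s(e)}$, set $\varphi_e(A):=\iota_{\bar e}(\iota_e^{-1}(A))$ (a factor of $G_{t(e)}$) if $A\subset\iota_e(G_e)$ and $\varphi_e(A):=\emptyset$ otherwise, with $\varphi_e(\emptyset)=\emptyset$. For an oriented path $\gamma=e_1\cdots e_n$, $\varphi_\gamma:=\varphi_{e_n}\circ\cdots\circ\varphi_{e_1}$. *)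

theory Defs
  imports "HOL-Algebra.Group"
begin

text \<open>A graph product over a simplicial graph with vertex set I, adjacency adj and
vertex-groups G i is presented by words of letters (i,g), g in carrier (G i),
modulo: merging two consecutive letters of the same vertex-group, deleting a
trivial letter, and swapping consecutive letters from adjacent vertex-groups.\<close>

definition gp_word :: "'i set \<Rightarrow> ('i \<Rightarrow> 'g monoid) \<Rightarrow> ('i \<times> 'g) list \<Rightarrow> bool" where
  "gp_word I G w \<longleftrightarrow> (\<forall>(i,g)\<in>set w. i \<in> I \<and> g \<in> carrier (G i))"

definition gp_move :: "('i \<Rightarrow> 'i \<Rightarrow> bool) \<Rightarrow> ('i \<Rightarrow> 'g monoid) \<Rightarrow> ('i \<times> 'g) list \<Rightarrow> ('i \<times> 'g) list \<Rightarrow> bool" where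
  "gp_move adj G l r \<longleftrightarrow>
     (\<exists>i g h. l = [(i,g),(i,h)] \<and> r = [(i, g \<otimes>\<^bsub>G i\<^esub> h)])
   \<or> (\<exists>i. l = [(i, \<one>\<^bsub>G i\<^esub>)] \<and> r = [])
   \<or> (\<exists>i j g h. adj i j \<and> l = [(i,g),(j,h)] \<and> r = [(j,h),(i,g)])"

inductive gp_eq :: "'i set \<Rightarrow> ('i \<Rightarrow> 'i \<Rightarrow> bool) \<Rightarrow> ('i \<Rightarrow> 'g monoid) \<Rightarrow> ('i \<times> 'g) list \<Rightarrow> ('i \<times> 'g) list \<Rightarrow> bool"
  for I adj G where
  gp_refl: "gp_word I G w \<Longrightarrow> gp_eq I adj G w w"
| gp_step: "gp_move adj G l r \<Longrightarrow> gp_word I G (u @ l @ w) \<Longrightarrow> gp_word I G (u @ r @ w)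
            \<Longrightarrow> gp_eq I adj G (u @ l @ w) (u @ r @ w)"
| gp_sym: "gp_eq I adj G w w' \<Longrightarrow> gp_eq I adj G w' w"
| gp_trans: "gp_eq I adj G w w' \<Longrightarrow> gp_eq I adj G w' w'' \<Longrightarrow> gp_eq I adj G w w''"

definition gp_class :: "'i set \<Rightarrow> ('i \<Rightarrow> 'i \<Rightarrow> bool) \<Rightarrow> ('i \<Rightarrow> 'g monoid) \<Rightarrow> ('i \<times> 'g) list \<Rightarrow> ('i \<times> 'g) list set" where
  "gp_class I adj G w = {w'. gp_eq I adj G w w'}"

definition gp_elems :: "'i set \<Rightarrow> ('i \<Rightarrow> 'i \<Rightarrow> bool) \<Rightarrow> ('i \<Rightarrow> 'g monoid) \<Rightarrow> ('i \<times> 'g) list set set" where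
  "gp_elems I adj G = {gp_class I adj G w | w. gp_word I G w}"

definition gp_factor :: "'i set \<Rightarrow> ('i \<Rightarrow> 'i \<Rightarrow> bool) \<Rightarrow> ('i \<Rightarrow> 'g monoid) \<Rightarrow> 'i \<Rightarrow> ('i \<times> 'g) list set set" where
  "gp_factor I adj G x = {gp_class I adj G [(x,g)] | g. g \<in> carrier (G x)}"

text \<open>Data: abstract graph (Vs, Es, rv = involution, src, tgt); for each vertex v a
simplicial graph (GV v, Gadj v) with vertex-groups Gfac v x; for each arrow e a
simplicial graph (EV e, Eadj e) with vertex-groups Efac e y (the decomposition of G_e);
the graphical embedding iota_e is given by the graph embedding emb e together with the
isomorphisms emb_iso e y from Efac e y onto Gfac (src e) (emb e y).\<close>

record ('v,'e,'x,'y,'g) rag =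
  Vs :: "'v set"
  Es :: "'e set"
  rv :: "'e \<Rightarrow> 'e"
  src :: "'e \<Rightarrow> 'v"
  tgt :: "'e \<Rightarrow> 'v"
  GV :: "'v \<Rightarrow> 'x set"
  Gadj :: "'v \<Rightarrow> 'x \<Rightarrow> 'x \<Rightarrow> bool"
  Gfac :: "'v \<Rightarrow> 'x \<Rightarrow> 'g monoid"
  EV :: "'e \<Rightarrow> 'y set"
  Eadj :: "'e \<Rightarrow> 'y \<Rightarrow> 'y \<Rightarrow> bool"
  Efac :: "'e \<Rightarrow> 'y \<Rightarrow> 'g monoid"
  emb :: "'e \<Rightarrow> 'y \<Rightarrow> 'x"
  emb_iso :: "'e \<Rightarrow> 'y \<Rightarrow> 'g \<Rightarrow> 'g"

fun opath :: "('v,'e,'x,'y,'g) rag \<Rightarrow> 'v \<Rightarrow> 'e list \<Rightarrow> 'v \<Rightarrow> bool" where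
  "opath R u [] v \<longleftrightarrow> u = v"
| "opath R u (e # \<gamma>) v \<longleftrightarrow> e \<in> Es R \<and> src R e = u \<and> opath R (tgt R e) \<gamma> v"

definition simplicial :: "'a set \<Rightarrow> ('a \<Rightarrow> 'a \<Rightarrow> bool) \<Rightarrow> bool" where
  "simplicial I adj \<longleftrightarrow> (\<forall>x y. adj x y \<longrightarrow> x \<in> I \<and> y \<in> I \<and> x \<noteq> y \<and> adj y x)"

definition nontriv_groups :: "'a set \<Rightarrow> ('a \<Rightarrow> 'g monoid) \<Rightarrow> bool" where
  "nontriv_groups I G \<longleftrightarrow> (\<forall>x\<in>I. group (G x) \<and> carrier (G x) \<noteq> {\<one>\<^bsub>G x\<^esub>})"

definition rag_gog :: "('v,'e,'x,'y,'g) rag \<Rightarrow> bool" where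
  "rag_gog R \<longleftrightarrow>
     (\<forall>e\<in>Es R. rv R e \<in> Es R \<and> rv R e \<noteq> e \<and> rv R (rv R e) = e \<and> src R e \<in> Vs R
               \<and> tgt R e = src R (rv R e))
   \<and> Vs R \<noteq> {} \<and> (\<forall>u\<in>Vs R. \<forall>v\<in>Vs R. \<exists>\<gamma>. opath R u \<gamma> v)
   \<and> (\<forall>v\<in>Vs R. simplicial (GV R v) (Gadj R v) \<and> nontriv_groups (GV R v) (Gfac R v))
   \<and> (\<forall>e\<in>Es R. simplicial (EV R e) (Eadj R e) \<and> nontriv_groups (EV R e) (Efac R e)
        \<and> EV R (rv R e) = EV R e \<and> Eadj R (rv R e) = Eadj R e \<and> Efac R (rv R e) = Efac R e
        \<and> inj_on (emb R e) (EV R e) \<and> emb R e ` EV R e \<subseteq> GV R (src R e)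
        \<and> (\<forall>y\<in>EV R e. \<forall>y'\<in>EV R e. Eadj R e y y' \<longleftrightarrow> Gadj R (src R e) (emb R e y) (emb R e y'))
        \<and> (\<forall>y\<in>EV R e. emb_iso R e y \<in> iso (Efac R e y) (Gfac R (src R e) (emb R e y))))"

definition Gv where "Gv R v = gp_elems (GV R v) (Gadj R v) (Gfac R v)"
definition Ge where "Ge R e = gp_elems (EV R e) (Eadj R e) (Efac R e)"
definition Afac where "Afac R v x = gp_factor (GV R v) (Gadj R v) (Gfac R v) x"

definition iota :: "('v,'e,'x,'y,'g) rag \<Rightarrow> 'e \<Rightarrow> ('y \<times> 'g) list set \<Rightarrow> ('x \<times> 'g) list set" where
  "iota R e c = gp_class (GV R (src R e)) (Gadj R (src R e)) (Gfac R (src R e))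
                  (map (\<lambda>(y,h). (emb R e y, emb_iso R e y h)) (SOME w. w \<in> c))"

text \<open>phi_e on subsets of G_{s(e)} (applied to factors or the empty set).\<close>
definition phi_e :: "('v,'e,'x,'y,'g) rag \<Rightarrow> 'e \<Rightarrow> ('x \<times> 'g) list set set \<Rightarrow> ('x \<times> 'g) list set set" where
  "phi_e R e S = (if S \<subseteq> iota R e ` Ge R e
                  then iota R (rv R e) ` {c \<in> Ge R e. iota R e c \<in> S} else {})"

definition phi_path :: "('v,'e,'x,'y,'g) rag \<Rightarrow> 'e list \<Rightarrow> ('x \<times> 'g) list set set \<Rightarrow> ('x \<times> 'g) list set set" where
  "phi_path R \<gamma> S = fold (phi_e R) \<gamma> S"

datatype ('v,'e,'x,'g) letter = Ar 'e | El 'v 'x 'g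

fun wend :: "('v,'e,'x,'y,'g) rag \<Rightarrow> 'v \<Rightarrow> ('v,'e,'x,'g) letter list \<Rightarrow> 'v option" where
  "wend R a [] = Some a"
| "wend R a (Ar e # w) = (if e \<in> Es R \<and> src R e = a then wend R (tgt R e) w else None)"
| "wend R a (El v x g # w) =
     (if v = a \<and> x \<in> GV R v \<and> g \<in> carrier (Gfac R v x) then wend R a w else None)"

text \<open>Defining relations: those of each G_v (graph product presentation),
 e e-bar = 1, and iota_e(g) e = e iota_{e-bar}(g) (on generators of G_e).\<close>
definition gd_rel :: "('v,'e,'x,'y,'g) rag \<Rightarrow> ('v,'e,'x,'g) letter list \<Rightarrow> ('v,'e,'x,'g) letter list \<Rightarrow> bool" where
  "gd_rel R l r \<longleftrightarrow>
     (\<exists>v x g h. l = [El v x g, El v x h] \<and> r = [El v x (g \<otimes>\<^bsub>Gfac R v x\<^esub> h)])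
   \<or> (\<exists>v x. l = [El v x \<one>\<^bsub>Gfac R v x\<^esub>] \<and> r = [])
   \<or> (\<exists>v x y g h. Gadj R v x y \<and> l = [El v x g, El v y h] \<and> r = [El v y h, El v x g])
   \<or> (\<exists>e. l = [Ar e, Ar (rv R e)] \<and> r = [])
   \<or> (\<exists>e y h. e \<in> Es R \<and> y \<in> EV R e \<and> h \<in> carrier (Efac R e y) \<and>
        l = [El (src R e) (emb R e y) (emb_iso R e y h), Ar e] \<and>
        r = [Ar e, El (tgt R e) (emb R (rv R e) y) (emb_iso R (rv R e) y h)])"

inductive gd_eq :: "('v,'e,'x,'y,'g) rag \<Rightarrow> 'v \<Rightarrow> ('v,'e,'x,'g) letter list \<Rightarrow> ('v,'e,'x,'g) letter list \<Rightarrow> bool"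
  for R a where
  gd_refl: "wend R a w \<noteq> None \<Longrightarrow> gd_eq R a w w"
| gd_step: "gd_rel R l r \<Longrightarrow> wend R a (u @ l @ w) \<noteq> None \<Longrightarrow> wend R a (u @ r @ w) \<noteq> None
            \<Longrightarrow> gd_eq R a (u @ l @ w) (u @ r @ w)"
| gd_sym: "gd_eq R a w w' \<Longrightarrow> gd_eq R a w' w"
| gd_trans: "gd_eq R a w w' \<Longrightarrow> gd_eq R a w' w'' \<Longrightarrow> gd_eq R a w w''"

text \<open>Morphisms of the fundamental groupoid with initial object a.\<close>
definition gd_class where "gd_class R a w = {w'. gd_eq R a w w'}"

definition Xverts where "Xverts R \<omega> = {gd_class R \<omega> w | w. wend R \<omega> w \<noteq> None}"

definition gen :: "('v,'e,'x,'y,'g) rag \<Rightarrow> 'v \<Rightarrow> ('v,'e,'x,'g) letter \<Rightarrow> bool" where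
  "gen R a s \<longleftrightarrow> (\<exists>e. s = Ar e \<and> e \<in> Es R \<and> src R e = a)
     \<or> (\<exists>x g. s = El a x g \<and> x \<in> GV R a \<and> g \<in> carrier (Gfac R a x) \<and> g \<noteq> \<one>\<^bsub>Gfac R a x\<^esub>)"

definition Xadj where
  "Xadj R \<omega> p q \<longleftrightarrow> (\<exists>w a s. wend R \<omega> w = Some a \<and> gen R a s \<and>
      ((p = gd_class R \<omega> w \<and> q = gd_class R \<omega> (w @ [s])) \<or>
       (q = gd_class R \<omega> w \<and> p = gd_class R \<omega> (w @ [s]))))"

definition Xedges where "Xedges R \<omega> = {{p, q} | p q. Xadj R \<omega> p q}"

definition edge_factor_label where
  "edge_factor_label R \<omega> \<epsilon> u x \<longleftrightarrow> (\<exists>w g. wend R \<omega> w = Some u \<and> x \<in> GV R u \<and>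
      g \<in> carrier (Gfac R u x) \<and> g \<noteq> \<one>\<^bsub>Gfac R u x\<^esub> \<and>
      \<epsilon> = {gd_class R \<omega> w, gd_class R \<omega> (w @ [El u x g])})"

definition hyp_rel where
  "hyp_rel R \<omega> = {(\<epsilon>1, \<epsilon>2). \<epsilon>1 \<in> Xedges R \<omega> \<and> \<epsilon>2 \<in> Xedges R \<omega> \<and>
     ((\<exists>a b c. Xadj R \<omega> a b \<and> Xadj R \<omega> b c \<and> Xadj R \<omega> a c \<and>
               \<epsilon>1 \<subseteq> {a,b,c} \<and> \<epsilon>2 \<subseteq> {a,b,c})
    \<or> (\<exists>a b c d. distinct [a,b,c,d] \<and> Xadj R \<omega> a b \<and> Xadj R \<omega> b c \<and> Xadj R \<omega> c d \<and>
               Xadj R \<omega> d a \<and> \<not> Xadj R \<omega> a c \<and> \<not> Xadj R \<omega> b d \<and>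
               {\<epsilon>1, \<epsilon>2} = {{a,b},{c,d}}))}"

definition same_hyperplane where
  "same_hyperplane R \<omega> \<epsilon> \<epsilon>' \<longleftrightarrow> (\<epsilon>, \<epsilon>') \<in> (hyp_rel R \<omega>)\<^sup>*"

end

theory Submission imports Defs begin

lemma gp_word_simps[simp]:
  "gp_word I G []"
  "gp_word I G (a # w) \<longleftrightarrow> fst a \<in> I \<and> snd a \<in> carrier (G (fst a)) \<and> gp_word I G w"
  "gp_word I G (u @ v) \<longleftrightarrow> gp_word I G u \<and> gp_word I G v"
  unfolding gp_word_def by (auto split: prod.splits)

lemma gp_eq_word: "gp_eq I adj G w w' \<Longrightarrow> gp_word I G w \<and> gp_word I G w'"
  by (induction rule: gp_eq.induct) auto

lemma gp_class_eq_iff: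
  assumes "gp_word I G w"
  shows "gp_class I adj G w = gp_class I adj G w' \<longleftrightarrow> gp_eq I adj G w w'"
proof
  assume "gp_class I adj G w = gp_class I adj G w'"
  moreover have "w \<in> gp_class I adj G w" using assms by (simp add: gp_class_def gp_refl)
  ultimately have "gp_eq I adj G w' w" by (simp add: gp_class_def)
  thus "gp_eq I adj G w w'" by (rule gp_sym)
next
  assume h: "gp_eq I adj G w w'"
  show "gp_class I adj G w = gp_class I adj G w'"
    unfolding gp_class_def using h by (blast intro: gp_trans gp_sym)
qed

lemma gp_move_merge: "gp_move adj G [(i,g),(i,h)] [(i, g \<otimes>\<^bsub>G i\<^esub> h)]"
  unfolding gp_move_def by simp
lemma gp_move_one: "gp_move adj G [(i,\<one>\<^bsub>G i\<^esub>)] []"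
  unfolding gp_move_def by simp
lemma gp_move_swap: "adj i j \<Longrightarrow> gp_move adj G [(i,g),(j,h)] [(j,h),(i,g)]"
  unfolding gp_move_def by simp

lemma gp_eq_pmap:
  fixes P :: "'i \<Rightarrow> bool" and f :: "'i \<Rightarrow> 'j" and m :: "'i \<Rightarrow> 'g \<Rightarrow> 'h"
    and G :: "'i \<Rightarrow> 'g monoid" and H :: "'j \<Rightarrow> 'h monoid"
  assumes A1: "\<forall>i\<in>I. P i \<longrightarrow> f i \<in> J"
    and A2: "\<forall>i\<in>I. P i \<longrightarrow> (\<forall>g\<in>carrier (G i). m i g \<in> carrier (H (f i)))"
    and A3: "\<forall>i\<in>I. P i \<longrightarrow> (\<forall>g\<in>carrier (G i). \<forall>h\<in>carrier (G i). m i (g \<otimes>\<^bsub>G i\<^esub> h) = m i g \<otimes>\<^bsub>H (f i)\<^esub> m i h)"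
    and A4: "\<forall>i\<in>I. P i \<longrightarrow> m i \<one>\<^bsub>G i\<^esub> = \<one>\<^bsub>H (f i)\<^esub>"
    and A5: "\<forall>i j. adj i j \<longrightarrow> i \<in> I \<longrightarrow> j \<in> I \<longrightarrow> P i \<longrightarrow> P j \<longrightarrow> adjJ (f i) (f j)"
  shows "gp_eq I adj G w w' \<Longrightarrow>
     gp_eq J adjJ H (map (\<lambda>(i,g). (f i, m i g)) (filter (\<lambda>(i,g). P i) w))
                    (map (\<lambda>(i,g). (f i, m i g)) (filter (\<lambda>(i,g). P i) w'))"
proof -
  let ?mu = "\<lambda>w. map (\<lambda>(i,g). (f i, m i g)) (filter (\<lambda>(i,g). P i) w)"
  have W: "gp_word I G w \<Longrightarrow> gp_word J H (?mu w)" for w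
  proof (induction w)
    case (Cons a w)
    obtain i g where a: "a = (i,g)" by (cases a)
    show ?case
    proof (cases "P i")
      case True
      have "i \<in> I" "g \<in> carrier (G i)" using Cons.prems a by auto
      then have "f i \<in> J" "m i g \<in> carrier (H (f i))" using A1 A2 True by blast+
      then show ?thesis using Cons a True by simp
    qed (use Cons a in simp)
  qed simp
  show "gp_eq I adj G w w' \<Longrightarrow> gp_eq J adjJ H (?mu w) (?mu w')"
  proof (induction rule: gp_eq.induct)
    case (gp_refl w)
    show ?case by (rule gp_eq.gp_refl, rule W, rule gp_refl)
  next
    case (gp_step l r u w)
    have wl: "gp_word J H (?mu (u @ l @ w))" by (rule W) (use gp_step.hyps in simp)
    have wr: "gp_word J H (?mu (u @ r @ w))" by (rule W) (use gp_step.hyps in simp)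
    have gl: "gp_word I G l" using gp_step by simp
    show ?case
    proof (cases "?mu l = ?mu r")
      case True
      have "?mu (u @ l @ w) = ?mu (u @ r @ w)" using True by simp
      then show ?thesis using wl gp_eq.gp_refl[of J H "?mu (u @ l @ w)" adjJ] by simp
    next
      case False
      have mv: "gp_move adjJ H (?mu l) (?mu r)"
        using gp_step(1)[unfolded gp_move_def]
      proof (elim disjE exE conjE)
        fix i g h assume l: "l = [(i, g), (i, h)]" and r: "r = [(i, g \<otimes>\<^bsub>G i\<^esub> h)]"
        have Pi: "P i" using False l r by (auto split: if_splits)
        have "i \<in> I" "g \<in> carrier (G i)" "h \<in> carrier (G i)" using gl l by auto
        then have e: "m i (g \<otimes>\<^bsub>G i\<^esub> h) = m i g \<otimes>\<^bsub>H (f i)\<^esub> m i h" using A3 Pi by blast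
        have "?mu l = [(f i, m i g), (f i, m i h)]" "?mu r = [(f i, m i g \<otimes>\<^bsub>H (f i)\<^esub> m i h)]"
          using l r Pi e by simp_all
        then show ?thesis by (simp add: gp_move_merge gp_move_one)
      next
        fix i assume l: "l = [(i, \<one>\<^bsub>G i\<^esub>)]" and r: "r = []"
        have Pi: "P i" using False l r by (auto split: if_splits)
        have "i \<in> I" using gl l by auto
        then have e: "m i \<one>\<^bsub>G i\<^esub> = \<one>\<^bsub>H (f i)\<^esub>" using A4 Pi by blast
        have "?mu l = [(f i, \<one>\<^bsub>H (f i)\<^esub>)]" "?mu r = []"
          using l r Pi e by simp_all
        then show ?thesis by (simp add: gp_move_merge gp_move_one)
      next
        fix i j g h assume a: "adj i j" and l: "l = [(i, g), (j, h)]" and r: "r = [(j, h), (i, g)]"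
        have Pi: "P i" "P j" using False l r by (auto split: if_splits)
        have "i \<in> I" "j \<in> I" using gl l by auto
        then have e: "adjJ (f i) (f j)" using A5 Pi a by blast
        have "?mu l = [(f i, m i g), (f j, m j h)]" "?mu r = [(f j, m j h), (f i, m i g)]"
          using l r Pi by simp_all
        then show ?thesis using e by (simp add: gp_move_swap)
      qed
      show ?thesis using gp_eq.gp_step[OF mv] wl wr by simp
    qed
  next
    case (gp_sym w w')
    show ?case by (rule gp_eq.gp_sym, rule gp_sym.IH)
  next
    case (gp_trans w w' w'')
    then show ?case using gp_eq.gp_trans by blast
  qed
qed


lemma iso_facts:
  assumes h: "h \<in> iso A B" and gA: "group A" and gB: "group B"
  shows "\<And>a. a \<in> carrier A \<Longrightarrow> h a \<in> carrier B"
    "\<And>b. b \<in> carrier B \<Longrightarrow> inv_into (carrier A) h b \<in> carrier A"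
    "\<And>a. a \<in> carrier A \<Longrightarrow> inv_into (carrier A) h (h a) = a"
    "\<And>b. b \<in> carrier B \<Longrightarrow> h (inv_into (carrier A) h b) = b"
    "\<And>a b. a \<in> carrier A \<Longrightarrow> b \<in> carrier A \<Longrightarrow> h (a \<otimes>\<^bsub>A\<^esub> b) = h a \<otimes>\<^bsub>B\<^esub> h b"
    "h \<one>\<^bsub>A\<^esub> = \<one>\<^bsub>B\<^esub>"
    "\<And>a b. a \<in> carrier B \<Longrightarrow> b \<in> carrier B \<Longrightarrow>
        inv_into (carrier A) h (a \<otimes>\<^bsub>B\<^esub> b) = inv_into (carrier A) h a \<otimes>\<^bsub>A\<^esub> inv_into (carrier A) h b"
    "inv_into (carrier A) h \<one>\<^bsub>B\<^esub> = \<one>\<^bsub>A\<^esub>"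
proof -
  have hom: "h \<in> hom A B" and bij: "bij_betw h (carrier A) (carrier B)" using h by (auto simp: iso_def)
  have hi: "inv_into (carrier A) h \<in> iso B A" using group.iso_set_sym[OF gA h] .
  have homi: "inv_into (carrier A) h \<in> hom B A" using hi by (auto simp: iso_def)
  show "\<And>a. a \<in> carrier A \<Longrightarrow> h a \<in> carrier B" using hom by (auto simp: hom_def)
  show "\<And>b. b \<in> carrier B \<Longrightarrow> inv_into (carrier A) h b \<in> carrier A" using homi by (auto simp: hom_def)
  show "\<And>a. a \<in> carrier A \<Longrightarrow> inv_into (carrier A) h (h a) = a"
    using bij by (simp add: bij_betw_def inv_into_f_f)
  show "\<And>b. b \<in> carrier B \<Longrightarrow> h (inv_into (carrier A) h b) = b"
    using bij by (simp add: bij_betw_def f_inv_into_f)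
  show "\<And>a b. a \<in> carrier A \<Longrightarrow> b \<in> carrier A \<Longrightarrow> h (a \<otimes>\<^bsub>A\<^esub> b) = h a \<otimes>\<^bsub>B\<^esub> h b"
    using hom by (simp add: hom_mult)
  show "h \<one>\<^bsub>A\<^esub> = \<one>\<^bsub>B\<^esub>" using hom gA gB by (rule hom_one)
  show "\<And>a b. a \<in> carrier B \<Longrightarrow> b \<in> carrier B \<Longrightarrow>
        inv_into (carrier A) h (a \<otimes>\<^bsub>B\<^esub> b) = inv_into (carrier A) h a \<otimes>\<^bsub>A\<^esub> inv_into (carrier A) h b"
    using homi by (simp add: hom_mult)
  show "inv_into (carrier A) h \<one>\<^bsub>B\<^esub> = \<one>\<^bsub>A\<^esub>" using homi gB gA by (rule hom_one)
qed

locale rctx =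
  fixes R :: "('v,'e,'x,'y,'g) rag"
  assumes gog: "rag_gog R"
begin

lemma E:
  assumes "e \<in> Es R"
  shows "rv R e \<in> Es R" "rv R e \<noteq> e" "rv R (rv R e) = e" "src R e \<in> Vs R"
    "tgt R e = src R (rv R e)" "tgt R (rv R e) = src R e" "tgt R e \<in> Vs R"
    "EV R (rv R e) = EV R e" "Eadj R (rv R e) = Eadj R e" "Efac R (rv R e) = Efac R e"
    "inj_on (emb R e) (EV R e)" "emb R e ` EV R e \<subseteq> GV R (src R e)"
    "simplicial (EV R e) (Eadj R e)" "nontriv_groups (EV R e) (Efac R e)"
  using gog assms unfolding rag_gog_def by (auto simp del: opath.simps)

lemma E_adj: "e \<in> Es R \<Longrightarrow> y \<in> EV R e \<Longrightarrow> y' \<in> EV R e \<Longrightarrow>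
   Eadj R e y y' \<longleftrightarrow> Gadj R (src R e) (emb R e y) (emb R e y')"
  using gog unfolding rag_gog_def by blast

lemma E_iso: "e \<in> Es R \<Longrightarrow> y \<in> EV R e \<Longrightarrow> emb_iso R e y \<in> iso (Efac R e y) (Gfac R (src R e) (emb R e y))"
  using gog unfolding rag_gog_def by blast

lemma V: "v \<in> Vs R \<Longrightarrow> simplicial (GV R v) (Gadj R v) \<and> nontriv_groups (GV R v) (Gfac R v)"
  using gog unfolding rag_gog_def by blast

lemma grpG: "v \<in> Vs R \<Longrightarrow> x \<in> GV R v \<Longrightarrow> group (Gfac R v x)"
  using V unfolding nontriv_groups_def by blast

lemma grpE: "e \<in> Es R \<Longrightarrow> y \<in> EV R e \<Longrightarrow> group (Efac R e y)"
  using E(14) unfolding nontriv_groups_def by blast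

lemma emb_in: "e \<in> Es R \<Longrightarrow> y \<in> EV R e \<Longrightarrow> emb R e y \<in> GV R (src R e)"
  using E(12) by blast

lemma Eiso_facts:
  assumes "e \<in> Es R" "y \<in> EV R e"
  shows "\<And>a. a \<in> carrier (Efac R e y) \<Longrightarrow> emb_iso R e y a \<in> carrier (Gfac R (src R e) (emb R e y))"
    "\<And>b. b \<in> carrier (Gfac R (src R e) (emb R e y)) \<Longrightarrow> inv_into (carrier (Efac R e y)) (emb_iso R e y) b \<in> carrier (Efac R e y)"
    "\<And>a. a \<in> carrier (Efac R e y) \<Longrightarrow> inv_into (carrier (Efac R e y)) (emb_iso R e y) (emb_iso R e y a) = a"
    "\<And>b. b \<in> carrier (Gfac R (src R e) (emb R e y)) \<Longrightarrow> emb_iso R e y (inv_into (carrier (Efac R e y)) (emb_iso R e y) b) = b"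
    "\<And>a b. a \<in> carrier (Efac R e y) \<Longrightarrow> b \<in> carrier (Efac R e y) \<Longrightarrow> emb_iso R e y (a \<otimes>\<^bsub>Efac R e y\<^esub> b) = emb_iso R e y a \<otimes>\<^bsub>Gfac R (src R e) (emb R e y)\<^esub> emb_iso R e y b"
    "emb_iso R e y \<one>\<^bsub>Efac R e y\<^esub> = \<one>\<^bsub>Gfac R (src R e) (emb R e y)\<^esub>"
    "\<And>a b. a \<in> carrier (Gfac R (src R e) (emb R e y)) \<Longrightarrow> b \<in> carrier (Gfac R (src R e) (emb R e y)) \<Longrightarrow>
        inv_into (carrier (Efac R e y)) (emb_iso R e y) (a \<otimes>\<^bsub>Gfac R (src R e) (emb R e y)\<^esub> b) = inv_into (carrier (Efac R e y)) (emb_iso R e y) a \<otimes>\<^bsub>Efac R e y\<^esub> inv_into (carrier (Efac R e y)) (emb_iso R e y) b"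
    "inv_into (carrier (Efac R e y)) (emb_iso R e y) \<one>\<^bsub>Gfac R (src R e) (emb R e y)\<^esub> = \<one>\<^bsub>Efac R e y\<^esub>"
  using iso_facts[OF E_iso[OF assms] grpE[OF assms] grpG[OF E(4)[OF assms(1)] emb_in[OF assms]]]
  by blast+

definition mu :: "'e \<Rightarrow> ('y \<times> 'g) list \<Rightarrow> ('x \<times> 'g) list" where
  "mu e w = map (\<lambda>(y,h). (emb R e y, emb_iso R e y h)) w"

definition rho :: "'e \<Rightarrow> ('x \<times> 'g) list \<Rightarrow> ('y \<times> 'g) list" where
  "rho e w = map (\<lambda>(x,g). (the_inv_into (EV R e) (emb R e) x,
      inv_into (carrier (Efac R e (the_inv_into (EV R e) (emb R e) x))) (emb_iso R e (the_inv_into (EV R e) (emb R e) x)) g))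
     (filter (\<lambda>(x,g). x \<in> emb R e ` EV R e) w)"

lemma filter_True': "filter (\<lambda>(i,g). True) w = w"
  by (induction w) auto

lemma mu_eq:
  assumes e: "e \<in> Es R" and h: "gp_eq (EV R e) (Eadj R e) (Efac R e) w w'"
  shows "gp_eq (GV R (src R e)) (Gadj R (src R e)) (Gfac R (src R e)) (mu e w) (mu e w')"
proof -
  have "gp_eq (GV R (src R e)) (Gadj R (src R e)) (Gfac R (src R e))
     (map (\<lambda>(i,g). (emb R e i, emb_iso R e i g)) (filter (\<lambda>(i,g). True) w))
     (map (\<lambda>(i,g). (emb R e i, emb_iso R e i g)) (filter (\<lambda>(i,g). True) w'))"
  proof (rule gp_eq_pmap[OF _ _ _ _ _ h])
    show "\<forall>i\<in>EV R e. True \<longrightarrow> emb R e i \<in> GV R (src R e)" using emb_in e by blast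
    show "\<forall>i\<in>EV R e. True \<longrightarrow> (\<forall>g\<in>carrier (Efac R e i). emb_iso R e i g \<in> carrier (Gfac R (src R e) (emb R e i)))"
      using Eiso_facts(1) e by blast
    show "\<forall>i\<in>EV R e. True \<longrightarrow> (\<forall>g\<in>carrier (Efac R e i). \<forall>h\<in>carrier (Efac R e i).
        emb_iso R e i (g \<otimes>\<^bsub>Efac R e i\<^esub> h) = emb_iso R e i g \<otimes>\<^bsub>Gfac R (src R e) (emb R e i)\<^esub> emb_iso R e i h)"
      using Eiso_facts(5) e by blast
    show "\<forall>i\<in>EV R e. True \<longrightarrow> emb_iso R e i \<one>\<^bsub>Efac R e i\<^esub> = \<one>\<^bsub>Gfac R (src R e) (emb R e i)\<^esub>"
      using Eiso_facts(6) e by blast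
    show "\<forall>i j. Eadj R e i j \<longrightarrow> i \<in> EV R e \<longrightarrow> j \<in> EV R e \<longrightarrow> True \<longrightarrow> True \<longrightarrow> Gadj R (src R e) (emb R e i) (emb R e j)"
      using E_adj e by blast
  qed
  then show ?thesis unfolding mu_def filter_True' .
qed

lemma rho_eq:
  assumes e: "e \<in> Es R" and h: "gp_eq (GV R (src R e)) (Gadj R (src R e)) (Gfac R (src R e)) w w'"
  shows "gp_eq (EV R e) (Eadj R e) (Efac R e) (rho e w) (rho e w')"
  unfolding rho_def
proof (rule gp_eq_pmap[OF _ _ _ _ _ h])
  let ?f = "the_inv_into (EV R e) (emb R e)"
  have inj: "inj_on (emb R e) (EV R e)" using E(11) e .
  have fi: "?f x \<in> EV R e" "emb R e (?f x) = x" if "x \<in> emb R e ` EV R e" for x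
    using that inj by (auto simp: the_inv_into_f_f the_inv_into_into)
  show "\<forall>i\<in>GV R (src R e). i \<in> emb R e ` EV R e \<longrightarrow> ?f i \<in> EV R e" using fi by blast
  show "\<forall>i\<in>GV R (src R e). i \<in> emb R e ` EV R e \<longrightarrow> (\<forall>g\<in>carrier (Gfac R (src R e) i).
      inv_into (carrier (Efac R e (?f i))) (emb_iso R e (?f i)) g \<in> carrier (Efac R e (?f i)))"
    using fi Eiso_facts(2) e by metis
  show "\<forall>i\<in>GV R (src R e). i \<in> emb R e ` EV R e \<longrightarrow> (\<forall>g\<in>carrier (Gfac R (src R e) i). \<forall>h\<in>carrier (Gfac R (src R e) i).
      inv_into (carrier (Efac R e (?f i))) (emb_iso R e (?f i)) (g \<otimes>\<^bsub>Gfac R (src R e) i\<^esub> h) =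
      inv_into (carrier (Efac R e (?f i))) (emb_iso R e (?f i)) g \<otimes>\<^bsub>Efac R e (?f i)\<^esub>
      inv_into (carrier (Efac R e (?f i))) (emb_iso R e (?f i)) h)"
    using fi Eiso_facts(7) e by metis
  show "\<forall>i\<in>GV R (src R e). i \<in> emb R e ` EV R e \<longrightarrow>
      inv_into (carrier (Efac R e (?f i))) (emb_iso R e (?f i)) \<one>\<^bsub>Gfac R (src R e) i\<^esub> = \<one>\<^bsub>Efac R e (?f i)\<^esub>"
    using fi Eiso_facts(8) e by metis
  show "\<forall>i j. Gadj R (src R e) i j \<longrightarrow> i \<in> GV R (src R e) \<longrightarrow> j \<in> GV R (src R e) \<longrightarrow>
      i \<in> emb R e ` EV R e \<longrightarrow> j \<in> emb R e ` EV R e \<longrightarrow> Eadj R e (?f i) (?f j)"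
    using fi E_adj e by metis
qed

lemma rho_mu: "e \<in> Es R \<Longrightarrow> gp_word (EV R e) (Efac R e) w \<Longrightarrow> rho e (mu e w) = w"
proof (induction w)
  case (Cons a w)
  obtain y h where a: "a = (y,h)" by (cases a)
  have y: "y \<in> EV R e" and hc: "h \<in> carrier (Efac R e y)" using Cons.prems a by auto
  have "the_inv_into (EV R e) (emb R e) (emb R e y) = y"
    using E(11)[OF Cons.prems(1)] y by (simp add: the_inv_into_f_f)
  then show ?case using Cons a y hc Eiso_facts(3)[OF Cons.prems(1) y hc]
    by (simp add: rho_def mu_def)
qed (simp add: rho_def mu_def)

end
context rctx begin

abbreviation "clE e \<equiv> gp_class (EV R e) (Eadj R e) (Efac R e)"
abbreviation "clV v \<equiv> gp_class (GV R v) (Gadj R v) (Gfac R v)"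

lemma mu_word: "e \<in> Es R \<Longrightarrow> gp_word (EV R e) (Efac R e) w \<Longrightarrow> gp_word (GV R (src R e)) (Gfac R (src R e)) (mu e w)"
  by (induction w) (auto simp: mu_def emb_in Eiso_facts(1))

lemma iota_class:
  assumes e: "e \<in> Es R" and w: "gp_word (EV R e) (Efac R e) w"
  shows "iota R e (clE e w) = clV (src R e) (mu e w)"
proof -
  have "w \<in> clE e w" using w by (simp add: gp_class_def gp_refl)
  then have "(SOME w'. w' \<in> clE e w) \<in> clE e w" by (rule someI)
  then have h: "gp_eq (EV R e) (Eadj R e) (Efac R e) w (SOME w'. w' \<in> clE e w)" by (simp add: gp_class_def)
  have "gp_eq (GV R (src R e)) (Gadj R (src R e)) (Gfac R (src R e)) (mu e w) (mu e (SOME w'. w' \<in> clE e w))"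
    using mu_eq[OF e h] .
  then have "clV (src R e) (mu e w) = clV (src R e) (mu e (SOME w'. w' \<in> clE e w))"
    using gp_class_eq_iff mu_word[OF e w] by blast
  then show ?thesis unfolding iota_def mu_def by simp
qed

lemma phi_e_Afac:
  assumes e: "e \<in> Es R" and y: "y \<in> EV R e"
  shows "phi_e R e (Afac R (src R e) (emb R e y)) = Afac R (tgt R e) (emb R (rv R e) y)"
proof -
  let ?x0 = "emb R e y"
  let ?S = "Afac R (src R e) ?x0"
  let ?hi = "inv_into (carrier (Efac R e y)) (emb_iso R e y)"
  have S: "?S = {clV (src R e) [(?x0, g)] | g. g \<in> carrier (Gfac R (src R e) ?x0)}"
    unfolding Afac_def gp_factor_def by simp
  have sub: "?S \<subseteq> iota R e ` Ge R e"
  proof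
    fix c assume "c \<in> ?S"
    then obtain g where g: "g \<in> carrier (Gfac R (src R e) ?x0)" and c: "c = clV (src R e) [(?x0, g)]"
      using S by blast
    have hg: "?hi g \<in> carrier (Efac R e y)" using Eiso_facts(2)[OF e y g] .
    have wd: "gp_word (EV R e) (Efac R e) [(y, ?hi g)]" using y hg by simp
    have "iota R e (clE e [(y, ?hi g)]) = c"
      using iota_class[OF e wd] c Eiso_facts(4)[OF e y g] by (simp add: mu_def)
    moreover have "clE e [(y, ?hi g)] \<in> Ge R e" using wd unfolding Ge_def gp_elems_def by blast
    ultimately show "c \<in> iota R e ` Ge R e" by blast
  qed
  have pre: "{c \<in> Ge R e. iota R e c \<in> ?S} = {clE e [(y,h)] | h. h \<in> carrier (Efac R e y)}"
  proof (intro equalityI subsetI)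
    fix c assume "c \<in> {c \<in> Ge R e. iota R e c \<in> ?S}"
    then obtain w where w: "gp_word (EV R e) (Efac R e) w" and c: "c = clE e w" and ic: "iota R e c \<in> ?S"
      unfolding Ge_def gp_elems_def by blast
    obtain g where g: "g \<in> carrier (Gfac R (src R e) ?x0)" and ic2: "iota R e c = clV (src R e) [(?x0, g)]"
      using ic S by blast
    have "clV (src R e) (mu e w) = clV (src R e) [(?x0, g)]" using ic2 iota_class[OF e w] c by simp
    then have "gp_eq (GV R (src R e)) (Gadj R (src R e)) (Gfac R (src R e)) (mu e w) [(?x0, g)]"
      using gp_class_eq_iff mu_word[OF e w] by blast
    then have "gp_eq (EV R e) (Eadj R e) (Efac R e) (rho e (mu e w)) (rho e [(?x0, g)])"
      by (rule rho_eq[OF e])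
    moreover have "rho e [(?x0, g)] = [(y, ?hi g)]"
      using E(11)[OF e] y by (simp add: rho_def the_inv_into_f_f)
    ultimately have "gp_eq (EV R e) (Eadj R e) (Efac R e) w [(y, ?hi g)]" using rho_mu[OF e w] by simp
    then have "c = clE e [(y, ?hi g)]" using c gp_class_eq_iff w by blast
    then show "c \<in> {clE e [(y,h)] | h. h \<in> carrier (Efac R e y)}" using Eiso_facts(2)[OF e y g] by blast
  next
    fix c assume "c \<in> {clE e [(y,h)] | h. h \<in> carrier (Efac R e y)}"
    then obtain h where h: "h \<in> carrier (Efac R e y)" and c: "c = clE e [(y,h)]" by blast
    have wd: "gp_word (EV R e) (Efac R e) [(y, h)]" using y h by simp
    have "c \<in> Ge R e" using wd c unfolding Ge_def gp_elems_def by blast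
    moreover have "iota R e c \<in> ?S"
      using iota_class[OF e wd] c S Eiso_facts(1)[OF e y h] by (auto simp: mu_def)
    ultimately show "c \<in> {c \<in> Ge R e. iota R e c \<in> ?S}" by blast
  qed
  have e': "rv R e \<in> Es R" and y': "y \<in> EV R (rv R e)" using E[OF e] y by auto
  have img: "iota R (rv R e) ` {clE e [(y,h)] | h. h \<in> carrier (Efac R e y)} = Afac R (tgt R e) (emb R (rv R e) y)"
  proof -
    have eq: "iota R (rv R e) (clE e [(y,h)]) = clV (tgt R e) [(emb R (rv R e) y, emb_iso R (rv R e) y h)]"
      if h: "h \<in> carrier (Efac R e y)" for h
    proof -
      have wd: "gp_word (EV R (rv R e)) (Efac R (rv R e)) [(y, h)]" using y' h E(10)[OF e] by simp
      show ?thesis using iota_class[OF e' wd] E[OF e] by (simp add: mu_def)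
    qed
    have carr: "carrier (Efac R (rv R e) y) = carrier (Efac R e y)" using E(10)[OF e] by simp
    show ?thesis
    proof (intro equalityI subsetI)
      fix c assume "c \<in> iota R (rv R e) ` {clE e [(y,h)] | h. h \<in> carrier (Efac R e y)}"
      then obtain h where h: "h \<in> carrier (Efac R e y)" and c: "c = iota R (rv R e) (clE e [(y,h)])" by blast
      have "emb_iso R (rv R e) y h \<in> carrier (Gfac R (tgt R e) (emb R (rv R e) y))"
        using Eiso_facts(1)[OF e' y'] h carr E(6)[OF e'] E(3)[OF e] E(5)[OF e] by metis
      then show "c \<in> Afac R (tgt R e) (emb R (rv R e) y)"
        unfolding Afac_def gp_factor_def using c eq[OF h] by blast
    next
      fix c assume "c \<in> Afac R (tgt R e) (emb R (rv R e) y)"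
      then obtain g where g: "g \<in> carrier (Gfac R (tgt R e) (emb R (rv R e) y))"
        and c: "c = clV (tgt R e) [(emb R (rv R e) y, g)]"
        unfolding Afac_def gp_factor_def by blast
      let ?h = "inv_into (carrier (Efac R (rv R e) y)) (emb_iso R (rv R e) y) g"
      have g': "g \<in> carrier (Gfac R (src R (rv R e)) (emb R (rv R e) y))" using g E(5)[OF e] by simp
      have h: "?h \<in> carrier (Efac R e y)" using Eiso_facts(2)[OF e' y' g'] carr by simp
      have "emb_iso R (rv R e) y ?h = g" using Eiso_facts(4)[OF e' y' g'] .
      then have "c = iota R (rv R e) (clE e [(y,?h)])" using eq[OF h] c by simp
      then show "c \<in> iota R (rv R e) ` {clE e [(y,h)] | h. h \<in> carrier (Efac R e y)}" using h by blast
    qed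
  qed
  show ?thesis unfolding phi_e_def using sub pre img by simp
qed

end
context rctx begin

fun red :: "'e list \<Rightarrow> bool" where
  "red [] = True"
| "red [e] = True"
| "red (e # f # q) = (f \<noteq> rv R e \<and> red (f # q))"

definition St :: "'v \<Rightarrow> ('e list \<times> 'x \<times> 'g) set" where
  "St v = {(q,x,\<alpha>). \<exists>z. opath R v q z \<and> red q \<and> x \<in> GV R z \<and> \<alpha> \<in> carrier (Gfac R z x) \<and>
       (q \<noteq> [] \<longrightarrow> x \<notin> emb R (rv R (last q)) ` EV R (last q))}"

definition pre :: "'e \<Rightarrow> 'x \<Rightarrow> 'y" where "pre e x = the_inv_into (EV R e) (emb R e) x"
definition tr :: "'e \<Rightarrow> 'y \<Rightarrow> 'g \<Rightarrow> 'g" where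
  "tr e y \<alpha> = emb_iso R (rv R e) y (inv_into (carrier (Efac R e y)) (emb_iso R e y) \<alpha>)"

fun act :: "('v,'e,'x,'g) letter \<Rightarrow> 'e list \<times> 'x \<times> 'g \<Rightarrow> 'e list \<times> 'x \<times> 'g" where
  "act (Ar e) (q,x,\<alpha>) = (if q \<noteq> [] \<and> hd q = e then (tl q, x, \<alpha>)
     else if q = [] \<and> x \<in> emb R e ` EV R e then ([], emb R (rv R e) (pre e x), tr e (pre e x) \<alpha>)
     else (rv R e # q, x, \<alpha>))"
| "act (El v x0 g) (q,x,\<alpha>) = (if q = [] \<and> x = x0 then (q, x, \<alpha> \<otimes>\<^bsub>Gfac R v x0\<^esub> g) else (q,x,\<alpha>))"

definition F :: "('v,'e,'x,'g) letter list \<Rightarrow> 'e list \<times> 'x \<times> 'g \<Rightarrow> 'e list \<times> 'x \<times> 'g" where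
  "F w = fold act w"

lemma F_simps[simp]: "F [] = id" "F (s # w) = F w \<circ> act s" "F (u @ w) = F w \<circ> F u"
  by (simp_all add: F_def)

lemma pre_facts: "e \<in> Es R \<Longrightarrow> x \<in> emb R e ` EV R e \<Longrightarrow> pre e x \<in> EV R e \<and> emb R e (pre e x) = x"
  unfolding pre_def using E(11) by (auto simp: the_inv_into_f_f the_inv_into_into)

lemma pre_emb: "e \<in> Es R \<Longrightarrow> y \<in> EV R e \<Longrightarrow> pre e (emb R e y) = y"
  unfolding pre_def using E(11) by (auto simp: the_inv_into_f_f)

lemma tr_carrier:
  assumes e: "e \<in> Es R" and y: "y \<in> EV R e" and a: "\<alpha> \<in> carrier (Gfac R (src R e) (emb R e y))"
  shows "tr e y \<alpha> \<in> carrier (Gfac R (tgt R e) (emb R (rv R e) y))"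
proof -
  have e': "rv R e \<in> Es R" and y': "y \<in> EV R (rv R e)" using E[OF e] y by auto
  have "inv_into (carrier (Efac R e y)) (emb_iso R e y) \<alpha> \<in> carrier (Efac R (rv R e) y)"
    using Eiso_facts(2)[OF e y a] E(10)[OF e] by simp
  then show ?thesis using Eiso_facts(1)[OF e' y'] E(5)[OF e] unfolding tr_def by simp
qed

lemma opath_Vs: "opath R v q z \<Longrightarrow> v \<in> Vs R \<Longrightarrow> z \<in> Vs R"
  by (induction q arbitrary: v) (auto simp: E(7))

lemma wend_append: "wend R a (u @ w) = (case wend R a u of None \<Rightarrow> None | Some b \<Rightarrow> wend R b w)"
proof (induction u arbitrary: a)
  case (Cons s u)
  then show ?case by (cases s) auto
qed simp

lemma wend_Vs: "wend R a w = Some b \<Longrightarrow> a \<in> Vs R \<Longrightarrow> b \<in> Vs R"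
proof (induction w arbitrary: a)
  case (Cons s w)
  then show ?case by (cases s) (auto split: if_splits simp: E(7))
qed simp

lemma act_St:
  assumes v: "v \<in> Vs R" and s: "\<sigma> \<in> St v" and wd: "wend R v [s] = Some b"
  shows "act s \<sigma> \<in> St b"
proof -
  obtain q x \<alpha> where sig: "\<sigma> = (q,x,\<alpha>)" by (cases \<sigma>)
  obtain z where op: "opath R v q z" and rq: "red q" and xz: "x \<in> GV R z" and az: "\<alpha> \<in> carrier (Gfac R z x)"
    and nm: "q \<noteq> [] \<longrightarrow> x \<notin> emb R (rv R (last q)) ` EV R (last q)"
    using s sig unfolding St_def by blast
  show ?thesis
  proof (cases s)
    case (Ar e)
    have e: "e \<in> Es R" and se: "src R e = v" and b: "b = tgt R e" using wd Ar by (auto split: if_splits)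
    show ?thesis
    proof (cases "q \<noteq> [] \<and> hd q = e")
      case True
      then obtain q' where q: "q = e # q'" by (cases q) auto
      have "opath R b q' z" using op q b by simp
      moreover have "red q'" using rq q by (cases q') auto
      moreover have "q' \<noteq> [] \<longrightarrow> x \<notin> emb R (rv R (last q')) ` EV R (last q')" using nm q by (auto split: if_splits)
      ultimately have "(q', x, \<alpha>) \<in> St b" unfolding St_def using xz az by blast
      moreover have "act s \<sigma> = (q', x, \<alpha>)" using Ar sig True q by simp
      ultimately show ?thesis by simp
    next
      case False
      show ?thesis
      proof (cases "q = [] \<and> x \<in> emb R e ` EV R e")
        case True
        have z: "z = v" using op True by simp
        have pf: "pre e x \<in> EV R e" "emb R e (pre e x) = x" using pre_facts[OF e] True by auto
        have "emb R (rv R e) (pre e x) \<in> GV R b"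
          using emb_in[of "rv R e" "pre e x"] E[OF e] pf b by simp
        moreover have "tr e (pre e x) \<alpha> \<in> carrier (Gfac R b (emb R (rv R e) (pre e x)))"
          using tr_carrier[OF e pf(1)] az z se pf b by simp
        ultimately have "([], emb R (rv R e) (pre e x), tr e (pre e x) \<alpha>) \<in> St b" unfolding St_def by auto
        moreover have "act s \<sigma> = ([], emb R (rv R e) (pre e x), tr e (pre e x) \<alpha>)" using Ar sig True False by simp
        ultimately show ?thesis by simp
      next
        case False2: False
        have "opath R b (rv R e # q) z" using op b E[OF e] se by simp
        moreover have "red (rv R e # q)" using rq False E(3)[OF e] by (cases q) auto
        moreover have "x \<notin> emb R (rv R (last (rv R e # q))) ` EV R (last (rv R e # q))"
          using nm False2 E[OF e] by (cases q) auto
        ultimately have "(rv R e # q, x, \<alpha>) \<in> St b" unfolding St_def using xz az by blast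
        moreover have "act s \<sigma> = (rv R e # q, x, \<alpha>)" using Ar sig False False2 by auto
        ultimately show ?thesis by simp
      qed
    qed
  next
    case (El v' x0 g)
    have v': "v' = v" and x0: "x0 \<in> GV R v" and g: "g \<in> carrier (Gfac R v x0)" and b: "b = v"
      using wd El by (auto split: if_splits)
    show ?thesis
    proof (cases "q = [] \<and> x = x0")
      case True
      have z: "z = v" using op True by simp
      have "group (Gfac R v x0)" using grpG[OF assms(1) x0] .
      then have "\<alpha> \<otimes>\<^bsub>Gfac R v x0\<^esub> g \<in> carrier (Gfac R v x0)" using az z True g by (simp add: group.is_monoid monoid.m_closed)
      then have "(q, x, \<alpha> \<otimes>\<^bsub>Gfac R v x0\<^esub> g) \<in> St b" unfolding St_def using True v' b op rq xz z by auto
      moreover have "act s \<sigma> = (q, x, \<alpha> \<otimes>\<^bsub>Gfac R v x0\<^esub> g)" using El sig True v' by simp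
      ultimately show ?thesis by simp
    next
      case False
      then show ?thesis using El sig b s v' by auto
    qed
  qed
qed

lemma F_St: "v \<in> Vs R \<Longrightarrow> \<sigma> \<in> St v \<Longrightarrow> wend R v w = Some b \<Longrightarrow> F w \<sigma> \<in> St b"
proof (induction w arbitrary: v \<sigma>)
  case Nil
  then show ?case by simp
next
  case (Cons s w)
  obtain c where c: "wend R v [s] = Some c" and w: "wend R c w = Some b"
    using Cons.prems(3) wend_append[of v "[s]" w] by (auto split: option.splits)
  have "act s \<sigma> \<in> St c" using act_St[OF Cons.prems(1,2) c] .
  moreover have "c \<in> Vs R" using wend_Vs[OF c Cons.prems(1)] .
  ultimately show ?case using Cons.IH[OF _ _ w] by simp
qed

end
context rctx begin

lemma St_E: assumes "(q,x,\<alpha>) \<in> St v"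
  obtains z where "opath R v q z" "red q" "x \<in> GV R z" "\<alpha> \<in> carrier (Gfac R z x)"
    "q \<noteq> [] \<Longrightarrow> x \<notin> emb R (rv R (last q)) ` EV R (last q)"
  using assms unfolding St_def by blast

lemma tr_tr:
  assumes e: "e \<in> Es R" and y: "y \<in> EV R e" and a: "\<alpha> \<in> carrier (Gfac R (src R e) (emb R e y))"
  shows "tr (rv R e) y (tr e y \<alpha>) = \<alpha>"
proof -
  have e': "rv R e \<in> Es R" and y': "y \<in> EV R (rv R e)" using E[OF e] y by auto
  let ?g = "inv_into (carrier (Efac R e y)) (emb_iso R e y) \<alpha>"
  have g: "?g \<in> carrier (Efac R (rv R e) y)" using Eiso_facts(2)[OF e y a] E(10)[OF e] by simp
  have "inv_into (carrier (Efac R (rv R e) y)) (emb_iso R (rv R e) y) (emb_iso R (rv R e) y ?g) = ?g"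
    using Eiso_facts(3)[OF e' y' g] .
  then show ?thesis unfolding tr_def using E(3)[OF e] Eiso_facts(4)[OF e y a] by simp
qed

lemma rel_inv:
  assumes e: "e \<in> Es R" and s: "\<sigma> \<in> St (src R e)"
  shows "act (Ar (rv R e)) (act (Ar e) \<sigma>) = \<sigma>"
proof -
  obtain q x \<alpha> where sig: "\<sigma> = (q,x,\<alpha>)" by (cases \<sigma>)
  obtain z where op: "opath R (src R e) q z" and rq: "red q" and xz: "x \<in> GV R z"
    and az: "\<alpha> \<in> carrier (Gfac R z x)" and nm: "q \<noteq> [] \<Longrightarrow> x \<notin> emb R (rv R (last q)) ` EV R (last q)"
    using s sig St_E by metis
  have rr: "rv R (rv R e) = e" using E(3)[OF e] .
  show ?thesis
  proof (cases "q \<noteq> [] \<and> hd q = e")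
    case True
    then obtain q' where q: "q = e # q'" by (cases q) auto
    have 1: "act (Ar e) \<sigma> = (q', x, \<alpha>)" using sig q by simp
    have "\<not> (q' \<noteq> [] \<and> hd q' = rv R e)" using rq q by (cases q') auto
    moreover have "\<not> (q' = [] \<and> x \<in> emb R (rv R e) ` EV R (rv R e))"
      using nm q E(8)[OF e] by auto
    ultimately show ?thesis using 1 sig q rr by auto
  next
    case False
    show ?thesis
    proof (cases "q = [] \<and> x \<in> emb R e ` EV R e")
      case True
      have z: "z = src R e" using op True by simp
      have pf: "pre e x \<in> EV R e" "emb R e (pre e x) = x" using pre_facts[OF e] True by auto
      have 1: "act (Ar e) \<sigma> = ([], emb R (rv R e) (pre e x), tr e (pre e x) \<alpha>)" using sig True by simp
      have e': "rv R e \<in> Es R" using E(1)[OF e] .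
      have y': "pre e x \<in> EV R (rv R e)" using pf E(8)[OF e] by simp
      have p2: "pre (rv R e) (emb R (rv R e) (pre e x)) = pre e x" using pre_emb[OF e' y'] .
      have "tr (rv R e) (pre e x) (tr e (pre e x) \<alpha>) = \<alpha>" using tr_tr[OF e pf(1)] az z pf by simp
      then show ?thesis using 1 sig True y' p2 rr pf by auto
    next
      case False2: False
      have "act (Ar e) \<sigma> = (rv R e # q, x, \<alpha>)" using sig False False2 by auto
      then show ?thesis using sig by simp
    qed
  qed
qed

lemma rel_comm:
  assumes e: "e \<in> Es R" and y: "y \<in> EV R e" and h: "h \<in> carrier (Efac R e y)" and s: "\<sigma> \<in> St (src R e)"
  shows "act (Ar e) (act (El (src R e) (emb R e y) (emb_iso R e y h)) \<sigma>)
       = act (El (tgt R e) (emb R (rv R e) y) (emb_iso R (rv R e) y h)) (act (Ar e) \<sigma>)"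
proof -
  obtain q x \<alpha> where sig: "\<sigma> = (q,x,\<alpha>)" by (cases \<sigma>)
  obtain z where op: "opath R (src R e) q z" and rq: "red q" and xz: "x \<in> GV R z"
    and az: "\<alpha> \<in> carrier (Gfac R z x)" and nm: "q \<noteq> [] \<Longrightarrow> x \<notin> emb R (rv R (last q)) ` EV R (last q)"
    using s sig St_E by metis
  have e': "rv R e \<in> Es R" and y': "y \<in> EV R (rv R e)" using E[OF e] y by auto
  have inj': "inj_on (emb R (rv R e)) (EV R e)" using E(11)[OF e'] E(8)[OF e] by simp
  show ?thesis
  proof (cases "q = [] \<and> x = emb R e y")
    case True
    have z: "z = src R e" using op True by simp
    let ?k = "emb_iso R e y h"
    let ?k' = "emb_iso R (rv R e) y h"
    have a: "\<alpha> \<in> carrier (Gfac R (src R e) (emb R e y))" using az z True by simp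
    have kc: "?k \<in> carrier (Gfac R (src R e) (emb R e y))" using Eiso_facts(1)[OF e y h] .
    have gs: "group (Gfac R (src R e) (emb R e y))" using grpG[OF E(4)[OF e] emb_in[OF e y]] .
    have ak: "\<alpha> \<otimes>\<^bsub>Gfac R (src R e) (emb R e y)\<^esub> ?k \<in> carrier (Gfac R (src R e) (emb R e y))"
      using a kc gs by (simp add: group.is_monoid monoid.m_closed)
    have pe: "pre e (emb R e y) = y" using pre_emb[OF e y] .
    let ?ii = "inv_into (carrier (Efac R e y)) (emb_iso R e y)"
    have i1: "?ii (\<alpha> \<otimes>\<^bsub>Gfac R (src R e) (emb R e y)\<^esub> ?k) = ?ii \<alpha> \<otimes>\<^bsub>Efac R e y\<^esub> h"
      using Eiso_facts(7)[OF e y a kc] Eiso_facts(3)[OF e y h] by simp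
    have ia: "?ii \<alpha> \<in> carrier (Efac R (rv R e) y)" using Eiso_facts(2)[OF e y a] E(10)[OF e] by simp
    have h': "h \<in> carrier (Efac R (rv R e) y)" using h E(10)[OF e] by simp
    have "tr e y (\<alpha> \<otimes>\<^bsub>Gfac R (src R e) (emb R e y)\<^esub> ?k) = tr e y \<alpha> \<otimes>\<^bsub>Gfac R (tgt R e) (emb R (rv R e) y)\<^esub> ?k'"
      unfolding tr_def i1 using Eiso_facts(5)[OF e' y' ia h'] E(10)[OF e] E(5)[OF e] by simp
    then show ?thesis using sig True pe y by simp
  next
    case False
    have 1: "act (El (src R e) (emb R e y) (emb_iso R e y h)) \<sigma> = \<sigma>" using sig False by auto
    show ?thesis
    proof (cases "q = [] \<and> x \<in> emb R e ` EV R e")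
      case True
      have pf: "pre e x \<in> EV R e" "emb R e (pre e x) = x" using pre_facts[OF e] True by auto
      have "pre e x \<noteq> y" using pf False True by auto
      then have "emb R (rv R e) (pre e x) \<noteq> emb R (rv R e) y" using inj' pf(1) y by (meson inj_on_eq_iff)
      then show ?thesis using 1 sig True by simp
    next
      case False2: False
      show ?thesis
      proof (cases "q \<noteq> [] \<and> hd q = e")
        case True
        then obtain q' where q: "q = e # q'" by (cases q) auto
        have "\<not> (q' = [] \<and> x = emb R (rv R e) y)" using nm q y by auto
        then show ?thesis using 1 sig q by auto
      next
        case False3: False
        then show ?thesis using 1 sig False2 by auto
      qed
    qed
  qed
qed

lemma rel_merge:
  assumes v: "v \<in> Vs R" and x: "x \<in> GV R v" and g: "g \<in> carrier (Gfac R v x)" and h: "h \<in> carrier (Gfac R v x)"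
    and s: "\<sigma> \<in> St v"
  shows "act (El v x h) (act (El v x g) \<sigma>) = act (El v x (g \<otimes>\<^bsub>Gfac R v x\<^esub> h)) \<sigma>"
proof -
  obtain q x' \<alpha> where sig: "\<sigma> = (q,x',\<alpha>)" by (cases \<sigma>)
  obtain z where op: "opath R v q z" and az: "\<alpha> \<in> carrier (Gfac R z x')"
    using s sig St_E by metis
  have gr: "group (Gfac R v x)" using grpG[OF v x] .
  show ?thesis
  proof (cases "q = [] \<and> x' = x")
    case True
    then have "\<alpha> \<in> carrier (Gfac R v x)" using op az by simp
    then show ?thesis using sig True g h gr by (simp add: group.is_monoid monoid.m_assoc)
  qed (use sig in auto)
qed

lemma rel_one:
  assumes v: "v \<in> Vs R" and x: "x \<in> GV R v" and s: "\<sigma> \<in> St v"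
  shows "act (El v x \<one>\<^bsub>Gfac R v x\<^esub>) \<sigma> = \<sigma>"
proof -
  obtain q x' \<alpha> where sig: "\<sigma> = (q,x',\<alpha>)" by (cases \<sigma>)
  obtain z where op: "opath R v q z" and az: "\<alpha> \<in> carrier (Gfac R z x')"
    using s sig St_E by metis
  have gr: "group (Gfac R v x)" using grpG[OF v x] .
  show ?thesis
  proof (cases "q = [] \<and> x' = x")
    case True
    then have "\<alpha> \<in> carrier (Gfac R v x)" using op az by simp
    then show ?thesis using sig True gr by (simp add: group.is_monoid monoid.r_one)
  qed (use sig in auto)
qed

lemma rel_swap:
  assumes v: "v \<in> Vs R" and a: "Gadj R v x y"
  shows "act (El v y h) (act (El v x g) \<sigma>) = act (El v x g) (act (El v y h) \<sigma>)"
proof -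
  have "x \<noteq> y" using V[OF v] a unfolding simplicial_def by blast
  then show ?thesis by (cases \<sigma>) auto
qed

lemma F_rel:
  assumes r: "gd_rel R l r" and v: "v \<in> Vs R" and wl: "wend R v l \<noteq> None" and wr: "wend R v r \<noteq> None"
    and s: "\<sigma> \<in> St v"
  shows "F l \<sigma> = F r \<sigma>"
  using r unfolding gd_rel_def
proof (elim disjE exE conjE)
  fix v' x g h assume l: "l = [El v' x g, El v' x h]" and r: "r = [El v' x (g \<otimes>\<^bsub>Gfac R v' x\<^esub> h)]"
  have "v' = v" "x \<in> GV R v" "g \<in> carrier (Gfac R v x)" "h \<in> carrier (Gfac R v x)"
    using wl l by (auto split: if_splits)
  then show ?thesis using rel_merge[OF v _ _ _ s] l r by simp
next
  fix v' x assume l: "l = [El v' x \<one>\<^bsub>Gfac R v' x\<^esub>]" and r: "r = []"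
  have "v' = v" "x \<in> GV R v" using wl l by (auto split: if_splits)
  then show ?thesis using rel_one[OF v _ s] l r by simp
next
  fix v' x y g h assume a: "Gadj R v' x y" and l: "l = [El v' x g, El v' y h]" and r: "r = [El v' y h, El v' x g]"
  have "v' = v" using wl l by (auto split: if_splits)
  then show ?thesis using rel_swap[OF v] a l r by simp
next
  fix e assume l: "l = [Ar e, Ar (rv R e)]" and r: "r = []"
  have "e \<in> Es R" "src R e = v" using wl l by (auto split: if_splits)
  then show ?thesis using rel_inv[of e \<sigma>] s l r by simp
next
  fix e y h assume e: "e \<in> Es R" and y: "y \<in> EV R e" and h: "h \<in> carrier (Efac R e y)"
    and l: "l = [El (src R e) (emb R e y) (emb_iso R e y h), Ar e]"
    and r: "r = [Ar e, El (tgt R e) (emb R (rv R e) y) (emb_iso R (rv R e) y h)]"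
  have "src R e = v" using wl l by (auto split: if_splits)
  then show ?thesis using rel_comm[OF e y h] s l r by simp
qed

lemma F_inv:
  assumes "gd_eq R \<omega> w w'" and "\<omega> \<in> Vs R" and "\<sigma> \<in> St \<omega>"
  shows "F w \<sigma> = F w' \<sigma>"
  using assms
proof (induction arbitrary: \<sigma> rule: gd_eq.induct)
  case (gd_step l r u w)
  obtain b where b: "wend R \<omega> u = Some b" and lb: "wend R b (l @ w) \<noteq> None"
    using gd_step.hyps(2) wend_append[of \<omega> u "l @ w"] by (auto split: option.splits)
  have rb: "wend R b (r @ w) \<noteq> None"
    using gd_step.hyps(3) wend_append[of \<omega> u "r @ w"] b by auto
  have l': "wend R b l \<noteq> None" using lb wend_append[of b l w] by (auto split: option.splits)
  have r': "wend R b r \<noteq> None" using rb wend_append[of b r w] by (auto split: option.splits)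
  have bV: "b \<in> Vs R" using wend_Vs[OF b gd_step.prems(1)] .
  have "F u \<sigma> \<in> St b" using F_St[OF gd_step.prems(1,2) b] .
  then have "F l (F u \<sigma>) = F r (F u \<sigma>)" using F_rel[OF gd_step.hyps(1) bV l' r'] by blast
  then show ?case by simp
qed auto

end
context rctx begin

definition dlt :: "'e \<Rightarrow> 'e \<Rightarrow> int" where
  "dlt e = (\<lambda>f. (if f = e then 1 else 0) - (if f = rv R e then 1 else 0))"

fun cnt :: "('v,'e,'x,'g) letter list \<Rightarrow> 'e \<Rightarrow> int" where
  "cnt [] = (\<lambda>_. 0)"
| "cnt (Ar e # w) = (\<lambda>f. dlt e f + cnt w f)"
| "cnt (El v x g # w) = cnt w"

fun narr :: "('v,'e,'x,'g) letter list \<Rightarrow> nat" where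
  "narr [] = 0"
| "narr (Ar e # w) = Suc (narr w)"
| "narr (El v x g # w) = narr w"

lemma cnt_append: "cnt (u @ w) = (\<lambda>f. cnt u f + cnt w f)"
proof (induction u)
  case (Cons s u)
  then show ?case by (cases s) auto
qed simp

lemma narr_append: "narr (u @ w) = narr u + narr w"
proof (induction u)
  case (Cons s u)
  then show ?case by (cases s) auto
qed simp

lemma dlt_eq: assumes "e \<in> Es R" "f \<in> Es R" "dlt e = dlt f" shows "e = f"
proof (rule ccontr)
  assume ne: "e \<noteq> f"
  have "dlt e e = 1" using E(2)[OF assms(1)] unfolding dlt_def by simp
  moreover have "dlt f e \<noteq> 1" using ne unfolding dlt_def by simp
  ultimately show False using assms(3) by simp
qed

lemma dlt_neg: assumes "e \<in> Es R" "f \<in> Es R" "\<And>g. dlt e g + dlt f g = 0" shows "f = rv R e"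
proof -
  have "dlt e e = 1" using E(2)[OF assms(1)] unfolding dlt_def by simp
  then have "dlt f e = -1" using assms(3)[of e] by simp
  then have "e = rv R f" unfolding dlt_def by (auto split: if_splits)
  then show ?thesis using E(3)[OF assms(2)] by simp
qed

lemma rel_inv_facts:
  assumes "gd_rel R l r" "wend R b l \<noteq> None" "wend R b r \<noteq> None"
  shows "wend R b l = wend R b r \<and> cnt l = cnt r \<and> even (narr l) = even (narr r)"
  using assms(1) unfolding gd_rel_def
proof (elim disjE exE conjE)
  fix e assume l: "l = [Ar e, Ar (rv R e)]" and r: "r = []"
  have e: "e \<in> Es R" "src R e = b" using assms(2) l by (auto split: if_splits)
  have "cnt l = cnt r" using E(3)[OF e(1)] E(2)[OF e(1)] l r by (auto simp: fun_eq_iff dlt_def)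
  then show ?thesis using l r assms(2) e E[OF e(1)] by (auto split: if_splits)
qed (use assms in \<open>auto split: if_splits\<close>)

lemma gd_inv:
  assumes "gd_eq R \<omega> w w'"
  shows "wend R \<omega> w = wend R \<omega> w' \<and> wend R \<omega> w \<noteq> None \<and> cnt w = cnt w' \<and> even (narr w) = even (narr w')"
  using assms
proof (induction rule: gd_eq.induct)
  case (gd_step l r u w)
  obtain b where b: "wend R \<omega> u = Some b"
    using gd_step.hyps(2) wend_append[of \<omega> u "l @ w"] by (auto split: option.splits)
  have lb: "wend R b (l @ w) \<noteq> None" and rb: "wend R b (r @ w) \<noteq> None"
    using gd_step.hyps(2,3) wend_append[of \<omega> u] b by auto
  obtain c where c: "wend R b l = Some c" using lb wend_append[of b l w] by (auto split: option.splits)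
  obtain c' where c': "wend R b r = Some c'" using rb wend_append[of b r w] by (auto split: option.splits)
  have f: "wend R b l = wend R b r \<and> cnt l = cnt r \<and> even (narr l) = even (narr r)"
    using rel_inv_facts[of l r b] gd_step.hyps(1) c c' by simp
  have "wend R \<omega> (u @ l @ w) = wend R \<omega> (u @ r @ w)"
    using f b wend_append[of \<omega> u] wend_append[of b l w] wend_append[of b r w] by simp
  then show ?case using f gd_step.hyps(2) by (simp add: cnt_append narr_append)
next
  case (gd_sym w w')
  have a: "wend R \<omega> w = wend R \<omega> w'" "wend R \<omega> w \<noteq> None" "cnt w = cnt w'" "even (narr w) = even (narr w')"
    using gd_sym.IH by blast+
  show ?case
  proof (intro conjI)
    show "wend R \<omega> w' = wend R \<omega> w" using a(1) by simp
    show "wend R \<omega> w' \<noteq> None" using a(1,2) by simp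
    show "cnt w' = cnt w" using a(3) by simp
    show "even (narr w') = even (narr w)" using a(4) by argo
  qed
next
  case (gd_trans w w' w'')
  have a: "wend R \<omega> w = wend R \<omega> w'" "wend R \<omega> w \<noteq> None" "cnt w = cnt w'" "even (narr w) = even (narr w')"
    using gd_trans.IH(1) by blast+
  have b: "wend R \<omega> w' = wend R \<omega> w''" "cnt w' = cnt w''" "even (narr w') = even (narr w'')"
    using gd_trans.IH(2) by blast+
  show ?case
  proof (intro conjI)
    show "wend R \<omega> w = wend R \<omega> w''" using a(1) b(1) by simp
    show "wend R \<omega> w \<noteq> None" using a(2) by simp
    show "cnt w = cnt w''" using a(3) b(2) by simp
    show "even (narr w) = even (narr w'')" using a(4) b(3) by argo
  qed
qed auto

lemma gd_cong:
  assumes "gd_eq R \<omega> w w'"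
  shows "wend R \<omega> (w @ z) \<noteq> None \<Longrightarrow> gd_eq R \<omega> (w @ z) (w' @ z)"
  using assms
proof (induction arbitrary: z rule: gd_eq.induct)
  case (gd_refl w)
  then show ?case by (simp add: gd_eq.gd_refl)
next
  case (gd_step l r u w)
  have "wend R \<omega> (u @ l @ w) = wend R \<omega> (u @ r @ w)"
    using gd_inv[OF gd_eq.gd_step[OF gd_step.hyps]] by simp
  then have "wend R \<omega> (u @ r @ (w @ z)) \<noteq> None"
    using gd_step.prems wend_append[of \<omega> "u @ l @ w" z] wend_append[of \<omega> "u @ r @ w" z] by simp
  then show ?case using gd_eq.gd_step[OF gd_step.hyps(1), of \<omega> u "w @ z"] gd_step.prems by simp
next
  case (gd_sym w w')
  have "wend R \<omega> w = wend R \<omega> w'" using gd_inv[OF gd_sym.hyps] by simp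
  then have "wend R \<omega> (w @ z) \<noteq> None" using gd_sym.prems wend_append[of \<omega> w z] wend_append[of \<omega> w' z] by simp
  then show ?case by (rule gd_eq.gd_sym[OF gd_sym.IH])
next
  case (gd_trans w w' w'')
  have "wend R \<omega> w = wend R \<omega> w'" using gd_inv[OF gd_trans.hyps(1)] by simp
  then have "wend R \<omega> (w' @ z) \<noteq> None" using gd_trans.prems wend_append[of \<omega> w z] wend_append[of \<omega> w' z] by simp
  then show ?case by (rule gd_eq.gd_trans[OF gd_trans.IH(1)[OF gd_trans.prems] gd_trans.IH(2)])
qed

lemma cls_eq_iff:
  assumes "wend R \<omega> w \<noteq> None"
  shows "gd_class R \<omega> w = gd_class R \<omega> w' \<longleftrightarrow> gd_eq R \<omega> w w'"
proof
  assume "gd_class R \<omega> w = gd_class R \<omega> w'"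
  moreover have "w \<in> gd_class R \<omega> w" using assms by (simp add: gd_class_def gd_refl)
  ultimately have "gd_eq R \<omega> w' w" by (simp add: gd_class_def)
  thus "gd_eq R \<omega> w w'" by (rule gd_sym)
next
  assume h: "gd_eq R \<omega> w w'"
  show "gd_class R \<omega> w = gd_class R \<omega> w'"
    unfolding gd_class_def using h by (blast intro: gd_trans gd_sym)
qed

lemma wend_snoc: "wend R \<omega> w = Some a \<Longrightarrow> wend R \<omega> (w @ z) = wend R a z"
  using wend_append[of \<omega> w z] by simp

lemma C_merge:
  assumes w: "wend R \<omega> w = Some a" and x: "x \<in> GV R a" and g: "g \<in> carrier (Gfac R a x)"
    and h: "h \<in> carrier (Gfac R a x)" and a: "a \<in> Vs R"
  shows "gd_eq R \<omega> (w @ [El a x g, El a x h]) (w @ [El a x (g \<otimes>\<^bsub>Gfac R a x\<^esub> h)])"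
proof -
  have gh: "g \<otimes>\<^bsub>Gfac R a x\<^esub> h \<in> carrier (Gfac R a x)"
    using grpG[OF a x] g h by (simp add: group.is_monoid monoid.m_closed)
  have "gd_rel R [El a x g, El a x h] [El a x (g \<otimes>\<^bsub>Gfac R a x\<^esub> h)]" unfolding gd_rel_def by blast
  from gd_step[OF this, of \<omega> w "[]"] show ?thesis using wend_snoc[OF w] x g h gh by simp
qed

lemma C_one:
  assumes w: "wend R \<omega> w = Some a" and x: "x \<in> GV R a" and a: "a \<in> Vs R"
  shows "gd_eq R \<omega> (w @ [El a x \<one>\<^bsub>Gfac R a x\<^esub>]) w"
proof -
  have o: "\<one>\<^bsub>Gfac R a x\<^esub> \<in> carrier (Gfac R a x)"
    using grpG[OF a x] by (simp add: group.is_monoid monoid.one_closed)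
  have "gd_rel R [El a x \<one>\<^bsub>Gfac R a x\<^esub>] []" unfolding gd_rel_def by blast
  from gd_step[OF this, of \<omega> w "[]"] show ?thesis using wend_snoc[OF w] w x o by simp
qed

lemma C_arr:
  assumes w: "wend R \<omega> w = Some a" and e: "e \<in> Es R" "src R e = a"
  shows "gd_eq R \<omega> (w @ [Ar e, Ar (rv R e)]) w"
proof -
  have "gd_rel R [Ar e, Ar (rv R e)] []" unfolding gd_rel_def by blast
  from gd_step[OF this, of \<omega> w "[]"] show ?thesis using wend_snoc[OF w] w e E[OF e(1)] by simp
qed

lemma act_El_inv:
  assumes a: "a \<in> Vs R" and x: "x \<in> GV R a" and g: "g \<in> carrier (Gfac R a x)" and t: "\<tau> \<in> St a"
  shows "act (El a x g) (act (El a x (inv\<^bsub>Gfac R a x\<^esub> g)) \<tau>) = \<tau>"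
proof -
  have gr: "group (Gfac R a x)" using grpG[OF a x] .
  have ig: "inv\<^bsub>Gfac R a x\<^esub> g \<in> carrier (Gfac R a x)" using gr g by (simp add: group.inv_closed)
  have "act (El a x g) (act (El a x (inv\<^bsub>Gfac R a x\<^esub> g)) \<tau>) = act (El a x \<one>\<^bsub>Gfac R a x\<^esub>) \<tau>"
    using rel_merge[OF a x ig g t] gr g by (simp add: group.l_inv)
  then show ?thesis using rel_one[OF a x t] by simp
qed

lemma act_surj:
  assumes a: "a \<in> Vs R" and wd: "wend R a [s] = Some b"
  shows "St b \<subseteq> act s ` St a"
proof
  fix \<tau> assume t: "\<tau> \<in> St b"
  show "\<tau> \<in> act s ` St a"
  proof (cases s)
    case (Ar e)
    have e: "e \<in> Es R" and se: "src R e = a" and b: "b = tgt R e" using wd Ar by (auto split: if_splits)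
    have e': "rv R e \<in> Es R" using E(1)[OF e] .
    have bV: "b \<in> Vs R" using b E(7)[OF e] by simp
    have "wend R b [Ar (rv R e)] = Some a" using b E[OF e] se by simp
    then have s1: "act (Ar (rv R e)) \<tau> \<in> St a" using act_St[OF bV t] by blast
    have "act (Ar (rv R (rv R e))) (act (Ar (rv R e)) \<tau>) = \<tau>"
      using rel_inv[OF e'] t b E[OF e] by simp
    then show ?thesis using Ar s1 E(3)[OF e] by (metis image_eqI)
  next
    case (El v x g)
    have v: "v = a" and x: "x \<in> GV R a" and g: "g \<in> carrier (Gfac R a x)" and b: "b = a"
      using wd El by (auto split: if_splits)
    have gr: "group (Gfac R a x)" using grpG[OF a x] .
    have ig: "inv\<^bsub>Gfac R a x\<^esub> g \<in> carrier (Gfac R a x)" using gr g by (simp add: group.inv_closed)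
    have "wend R a [El a x (inv\<^bsub>Gfac R a x\<^esub> g)] = Some a" using x ig by simp
    then have s1: "act (El a x (inv\<^bsub>Gfac R a x\<^esub> g)) \<tau> \<in> St a" using act_St[OF a] t b by blast
    then show ?thesis using act_El_inv[OF a x g] t b El v by (metis image_eqI)
  qed
qed

lemma F_surj: "a \<in> Vs R \<Longrightarrow> wend R a w = Some b \<Longrightarrow> St b \<subseteq> F w ` St a"
proof (induction w arbitrary: a)
  case Nil
  then show ?case by simp
next
  case (Cons s w)
  obtain c where c: "wend R a [s] = Some c" and w: "wend R c w = Some b"
    using Cons.prems(2) wend_append[of a "[s]" w] by (auto split: option.splits)
  have cV: "c \<in> Vs R" using wend_Vs[OF c Cons.prems(1)] .
  have 1: "St b \<subseteq> F w ` St c" using Cons.IH[OF cV w] .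
  have 2: "St c \<subseteq> act s ` St a" using act_surj[OF Cons.prems(1) c] .
  show ?case
  proof
    fix \<tau> assume "\<tau> \<in> St b"
    then obtain \<rho> where r: "\<rho> \<in> St c" "\<tau> = F w \<rho>" using 1 by blast
    then obtain \<sigma> where "\<sigma> \<in> St a" "\<rho> = act s \<sigma>" using 2 by blast
    then show "\<tau> \<in> F (s # w) ` St a" using r by simp
  qed
qed

end
context rctx begin

lemma St_base: "a \<in> Vs R \<Longrightarrow> X \<in> GV R a \<Longrightarrow> g \<in> carrier (Gfac R a X) \<Longrightarrow> ([], X, g) \<in> St a"
  unfolding St_def by simp

lemma one_c: "a \<in> Vs R \<Longrightarrow> X \<in> GV R a \<Longrightarrow> \<one>\<^bsub>Gfac R a X\<^esub> \<in> carrier (Gfac R a X)"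
  using grpG by (simp add: group.is_monoid monoid.one_closed)

lemma act_one_base:
  assumes "a \<in> Vs R" "X \<in> GV R a" "g \<in> carrier (Gfac R a X)"
  shows "act (El a X g) ([], X, \<one>\<^bsub>Gfac R a X\<^esub>) = ([], X, g)"
  using grpG[OF assms(1,2)] assms(3) by (simp add: group.is_monoid monoid.l_one)

lemma act_El_other: "Y \<noteq> X \<Longrightarrow> act (El a Y h) ([], X, \<beta>) = ([], X, \<beta>)"
  by simp

lemma L1:
  assumes a: "a \<in> Vs R" and X: "X \<in> GV R a" and Y: "Y \<in> GV R a" and Z: "Z \<in> GV R a"
    and g: "g \<in> carrier (Gfac R a X)" "g \<noteq> \<one>\<^bsub>Gfac R a X\<^esub>"
    and h: "h \<in> carrier (Gfac R a Y)" "h \<noteq> \<one>\<^bsub>Gfac R a Y\<^esub>"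
    and k: "k \<in> carrier (Gfac R a Z)" "k \<noteq> \<one>\<^bsub>Gfac R a Z\<^esub>"
    and H: "\<forall>\<tau>\<in>St a. act (El a Y h) (act (El a X g) \<tau>) = act (El a Z k) \<tau>"
  shows "Y = X \<and> Z = X"
proof -
  have ZX: "Z = X"
  proof (rule ccontr)
    assume nz: "Z \<noteq> X"
    show False
    proof (cases "Y = X")
      case False
      have "act (El a Y h) (act (El a X g) ([], X, \<one>\<^bsub>Gfac R a X\<^esub>)) = act (El a Z k) ([], X, \<one>\<^bsub>Gfac R a X\<^esub>)"
        using H St_base[OF a X one_c[OF a X]] by blast
      then show False using act_one_base[OF a X g(1)] False nz g(2) by simp
    next
      case True
      have "act (El a Y h) (act (El a X g) ([], Z, \<one>\<^bsub>Gfac R a Z\<^esub>)) = act (El a Z k) ([], Z, \<one>\<^bsub>Gfac R a Z\<^esub>)"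
        using H St_base[OF a Z one_c[OF a Z]] by blast
      then show False using act_one_base[OF a Z k(1)] True nz k(2) by simp
    qed
  qed
  have "Y = X"
  proof (rule ccontr)
    assume ny: "Y \<noteq> X"
    have "act (El a Y h) (act (El a X g) ([], Y, \<one>\<^bsub>Gfac R a Y\<^esub>)) = act (El a Z k) ([], Y, \<one>\<^bsub>Gfac R a Y\<^esub>)"
      using H St_base[OF a Y one_c[OF a Y]] by blast
    then show False using act_one_base[OF a Y h(1)] ZX ny h(2) by simp
  qed
  then show ?thesis using ZX by simp
qed

lemma L_sq1:
  assumes a: "a \<in> Vs R" and X: "X \<in> GV R a"
    and g: "g \<in> carrier (Gfac R a X)" "g \<noteq> \<one>\<^bsub>Gfac R a X\<^esub>"
    and n2: "X2 \<noteq> X" and n4: "X4 \<noteq> X"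
    and H: "\<forall>\<tau>\<in>St a. act (El a X4 l) (act (El a X3 k) (act (El a X2 h) (act (El a X g) \<tau>))) = \<tau>"
  shows "X3 = X"
proof (rule ccontr)
  assume n3: "X3 \<noteq> X"
  have "act (El a X4 l) (act (El a X3 k) (act (El a X2 h) (act (El a X g) ([], X, \<one>\<^bsub>Gfac R a X\<^esub>)))) = ([], X, \<one>\<^bsub>Gfac R a X\<^esub>)"
    using H St_base[OF a X one_c[OF a X]] by blast
  then show False using act_one_base[OF a X g(1)] n2 n3 n4 g(2) by simp
qed

lemma act_El_fix: "\<not> (\<exists>\<beta>. \<rho> = ([], Y, \<beta>)) \<Longrightarrow> act (El b Y k) \<rho> = \<rho>"
  by (cases \<rho>) auto

lemma L_sq2:
  assumes f: "f \<in> Es R" and a: "src R f = a" and X: "X \<in> GV R a"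
    and g: "g \<in> carrier (Gfac R a X)" "g \<noteq> \<one>\<^bsub>Gfac R a X\<^esub>"
    and Y: "Y \<in> GV R (tgt R f)" and k: "k \<in> carrier (Gfac R (tgt R f) Y)"
    and H: "\<forall>\<tau>\<in>St a. act (Ar (rv R f)) (act (El (tgt R f) Y k) (act (Ar f) (act (El a X g) \<tau>))) = \<tau>"
  shows "\<exists>y\<in>EV R f. X = emb R f y \<and> Y = emb R (rv R f) y"
proof -
  have aV: "a \<in> Vs R" using E(4)[OF f] a by simp
  have bV: "tgt R f \<in> Vs R" using E(7)[OF f] .
  let ?t0 = "([], X, \<one>\<^bsub>Gfac R a X\<^esub>) :: 'e list \<times> 'x \<times> 'g"
  let ?t1 = "([], X, g) :: 'e list \<times> 'x \<times> 'g"
  have t0: "?t0 \<in> St a" using St_base[OF aV X one_c[OF aV X]] .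
  have t1: "?t1 \<in> St a" using St_base[OF aV X g(1)] .
  have a1: "act (El a X g) ?t0 = ?t1" using act_one_base[OF aV X g(1)] .
  have wf: "wend R a [Ar f] = Some (tgt R f)" using f a by simp
  have r1: "act (Ar f) ?t1 \<in> St (tgt R f)" using act_St[OF aV t1 wf] .
  have wk: "wend R (tgt R f) [El (tgt R f) Y k] = Some (tgt R f)" using Y k by simp
  have r2: "act (El (tgt R f) Y k) (act (Ar f) ?t1) \<in> St (tgt R f)" using act_St[OF bV r1 wk] .
  have H0: "act (Ar (rv R f)) (act (El (tgt R f) Y k) (act (Ar f) ?t1)) = ?t0" using H t0 a1 by metis
  have f': "rv R f \<in> Es R" using E(1)[OF f] .
  have "act (Ar (rv R (rv R f))) (act (Ar (rv R f)) (act (El (tgt R f) Y k) (act (Ar f) ?t1)))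
        = act (El (tgt R f) Y k) (act (Ar f) ?t1)"
    using rel_inv[OF f'] r2 E[OF f] by simp
  then have eq: "act (El (tgt R f) Y k) (act (Ar f) ?t1) = act (Ar f) ?t0" using H0 E(3)[OF f] by simp
  have inv0: "act (Ar (rv R f)) (act (Ar f) ?t0) = ?t0" by (rule rel_inv[OF f]) (use t0 a in simp)
  have inv1: "act (Ar (rv R f)) (act (Ar f) ?t1) = ?t1" by (rule rel_inv[OF f]) (use t1 a in simp)
  have "\<exists>\<beta>. act (Ar f) ?t1 = ([], Y, \<beta>)"
  proof (rule ccontr)
    assume "\<not> (\<exists>\<beta>. act (Ar f) ?t1 = ([], Y, \<beta>))"
    then have "act (Ar f) ?t1 = act (Ar f) ?t0" using eq act_El_fix by metis
    then have "?t1 = ?t0" using inv0 inv1 by metis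
    then show False using g(2) by simp
  qed
  then obtain \<beta> where b: "act (Ar f) ?t1 = ([], Y, \<beta>)" by blast
  have xin: "X \<in> emb R f ` EV R f"
  proof (rule ccontr)
    assume "X \<notin> emb R f ` EV R f"
    then have "act (Ar f) ?t1 = ([rv R f], X, g)" by simp
    then show False using b by simp
  qed
  have pf: "pre f X \<in> EV R f" "emb R f (pre f X) = X" using pre_facts[OF f xin] by auto
  have "act (Ar f) ?t1 = ([], emb R (rv R f) (pre f X), tr f (pre f X) g)" using xin by simp
  then have "Y = emb R (rv R f) (pre f X)" using b by simp
  then show ?thesis using pf by metis
qed

end

definition Tst :: "('v,'e,'x,'y,'g) rag \<Rightarrow> 'v \<times> 'x \<Rightarrow> 'v \<times> 'x \<Rightarrow> bool" where
  "Tst R p p' \<longleftrightarrow> (\<exists>e\<in>Es R. \<exists>y\<in>EV R e. p = (src R e, emb R e y) \<and> p' = (tgt R e, emb R (rv R e) y))"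

lemma opath_append: "opath R u (\<gamma> @ \<delta>) w \<longleftrightarrow> (\<exists>m. opath R u \<gamma> m \<and> opath R m \<delta> w)"
  by (induction \<gamma> arbitrary: u) auto

context rctx begin

lemma Tst_path:
  assumes "(Tst R)\<^sup>*\<^sup>* (u, x) (v, y)"
  shows "\<exists>\<gamma>. opath R u \<gamma> v \<and> phi_path R \<gamma> (Afac R u x) = Afac R v y"
  using assms
proof (induction rule: rtranclp_induct2)
  case refl
  show ?case by (rule exI[of _ "[]"]) (simp add: phi_path_def)
next
  case (step z X z' X')
  obtain \<gamma> where g: "opath R u \<gamma> z" "phi_path R \<gamma> (Afac R u x) = Afac R z X" using step.IH by blast
  obtain e y where e: "e \<in> Es R" "y \<in> EV R e" "(z, X) = (src R e, emb R e y)" "(z', X') = (tgt R e, emb R (rv R e) y)"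
    using step.hyps(2) unfolding Tst_def by blast
  have "opath R u (\<gamma> @ [e]) z'" using g(1) e opath_append by fastforce
  moreover have "phi_path R (\<gamma> @ [e]) (Afac R u x) = Afac R z' X'"
    using g(2) e phi_e_Afac[OF e(1,2)] by (simp add: phi_path_def)
  ultimately show ?case by blast
qed

end


locale rctx2 = rctx R for R :: "('v,'e,'x,'y,'g) rag" +
  fixes \<omega> :: 'v
  assumes omega: "\<omega> \<in> Vs R"
begin

abbreviation cls where "cls w \<equiv> gd_class R \<omega> w"

definition FS where
  "FS p q A X \<longleftrightarrow> X \<in> GV R A \<and> (\<exists>w. wend R \<omega> w \<noteq> None \<and> p = cls w) \<and>
     (\<forall>w. wend R \<omega> w \<noteq> None \<longrightarrow> p = cls w \<longrightarrow> wend R \<omega> w = Some A \<and>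
        (\<exists>g. g \<in> carrier (Gfac R A X) \<and> g \<noteq> \<one>\<^bsub>Gfac R A X\<^esub> \<and> q = cls (w @ [El A X g])))"

definition AS where
  "AS p q f \<longleftrightarrow> f \<in> Es R \<and> (\<exists>w. wend R \<omega> w \<noteq> None \<and> p = cls w) \<and>
     (\<forall>w. wend R \<omega> w \<noteq> None \<longrightarrow> p = cls w \<longrightarrow> wend R \<omega> w = Some (src R f) \<and> q = cls (w @ [Ar f]))"

lemma cls_gd: "wend R \<omega> w \<noteq> None \<Longrightarrow> cls w = cls w' \<Longrightarrow> gd_eq R \<omega> w w'"
  using cls_eq_iff by blast

lemma cls_facts:
  assumes "wend R \<omega> w \<noteq> None" "cls w = cls w'"
  shows "wend R \<omega> w' = wend R \<omega> w" "cnt w = cnt w'" "even (narr w) = even (narr w')"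
    "\<forall>\<sigma>\<in>St \<omega>. F w \<sigma> = F w' \<sigma>"
  using gd_inv[OF cls_gd[OF assms]] F_inv[OF cls_gd[OF assms] omega] by auto

lemma cls_eqI: "gd_eq R \<omega> w w' \<Longrightarrow> cls w = cls w'"
  using cls_eq_iff gd_inv by blast

lemma loc_eq:
  assumes w: "wend R \<omega> w = Some A" and wu: "wend R \<omega> (w @ u) \<noteq> None" and c: "cls (w @ u) = cls (w @ v)"
  shows "\<forall>\<tau>\<in>St A. F u \<tau> = F v \<tau>" "cnt u = cnt v" "even (narr u) = even (narr v)"
proof -
  have AV: "A \<in> Vs R" using wend_Vs[OF w omega] .
  have H: "\<forall>\<sigma>\<in>St \<omega>. F (w @ u) \<sigma> = F (w @ v) \<sigma>" using cls_facts(4)[OF wu c] .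
  show "\<forall>\<tau>\<in>St A. F u \<tau> = F v \<tau>"
  proof
    fix \<tau> assume "\<tau> \<in> St A"
    then obtain \<sigma> where s: "\<sigma> \<in> St \<omega>" "\<tau> = F w \<sigma>" using F_surj[OF omega w] by blast
    then show "F u \<tau> = F v \<tau>" using H by simp
  qed
  have "cnt (w @ u) = cnt (w @ v)" using cls_facts(2)[OF wu c] .
  then show "cnt u = cnt v" by (simp add: cnt_append fun_eq_iff)
  have "even (narr (w @ u)) = even (narr (w @ v))" using cls_facts(3)[OF wu c] .
  then show "even (narr u) = even (narr v)" by (simp add: narr_append) argo
qed

lemma rep_F:
  assumes w: "wend R \<omega> w = Some a" and X: "X \<in> GV R a" and g: "g \<in> carrier (Gfac R a X)" "g \<noteq> \<one>\<^bsub>Gfac R a X\<^esub>"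
  shows "FS (cls w) (cls (w @ [El a X g])) a X" "FS (cls (w @ [El a X g])) (cls w) a X"
proof -
  have aV: "a \<in> Vs R" using wend_Vs[OF w omega] .
  have ws: "wend R \<omega> (w @ [El a X g]) = Some a" using wend_snoc[OF w] X g by simp
  show "FS (cls w) (cls (w @ [El a X g])) a X"
    unfolding FS_def
  proof (intro conjI allI impI)
    show "X \<in> GV R a" using X .
    show "\<exists>w'. wend R \<omega> w' \<noteq> None \<and> cls w = cls w'" using w by blast
    fix w' assume w'1: "wend R \<omega> w' \<noteq> None" and w'2: "cls w = cls w'"
    show "wend R \<omega> w' = Some a" using cls_facts(1)[OF _ w'2] w by simp
    have "gd_eq R \<omega> (w @ [El a X g]) (w' @ [El a X g])"
      using gd_cong[OF cls_gd[OF _ w'2]] w ws by simp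
    then have "cls (w @ [El a X g]) = cls (w' @ [El a X g])" by (rule cls_eqI)
    then show "\<exists>g'. g' \<in> carrier (Gfac R a X) \<and> g' \<noteq> \<one>\<^bsub>Gfac R a X\<^esub> \<and> cls (w @ [El a X g]) = cls (w' @ [El a X g'])"
      using g by blast
  qed
  show "FS (cls (w @ [El a X g])) (cls w) a X"
    unfolding FS_def
  proof (intro conjI allI impI)
    show "X \<in> GV R a" using X .
    show "\<exists>w'. wend R \<omega> w' \<noteq> None \<and> cls (w @ [El a X g]) = cls w'" using ws by blast
    fix w' assume w'1: "wend R \<omega> w' \<noteq> None" and w'2: "cls (w @ [El a X g]) = cls w'"
    show w'a: "wend R \<omega> w' = Some a" using cls_facts(1)[OF _ w'2] ws by simp
    have gr: "group (Gfac R a X)" using grpG[OF aV X] .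
    let ?i = "inv\<^bsub>Gfac R a X\<^esub> g"
    have ic: "?i \<in> carrier (Gfac R a X)" using gr g by (simp add: group.inv_closed)
    have ine: "?i \<noteq> \<one>\<^bsub>Gfac R a X\<^esub>" using gr g by (metis group.inv_inv group.is_monoid monoid.inv_one)
    have "gd_eq R \<omega> ((w @ [El a X g]) @ [El a X ?i]) (w' @ [El a X ?i])"
      using gd_cong[OF cls_gd[OF _ w'2]] ws wend_snoc[OF ws] X ic by simp
    then have 1: "cls (w' @ [El a X ?i]) = cls (w @ [El a X g, El a X ?i])" using cls_eqI by simp
    have "gd_eq R \<omega> (w @ [El a X g, El a X ?i]) (w @ [El a X (g \<otimes>\<^bsub>Gfac R a X\<^esub> ?i)])"
      using C_merge[OF w X g(1) ic aV] .
    also have "g \<otimes>\<^bsub>Gfac R a X\<^esub> ?i = \<one>\<^bsub>Gfac R a X\<^esub>" using gr g by (simp add: group.r_inv)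
    finally have 2: "cls (w @ [El a X g, El a X ?i]) = cls (w @ [El a X \<one>\<^bsub>Gfac R a X\<^esub>])" using cls_eqI by simp
    have 3: "cls (w @ [El a X \<one>\<^bsub>Gfac R a X\<^esub>]) = cls w" using cls_eqI[OF C_one[OF w X aV]] .
    show "\<exists>g'. g' \<in> carrier (Gfac R a X) \<and> g' \<noteq> \<one>\<^bsub>Gfac R a X\<^esub> \<and> cls w = cls (w' @ [El a X g'])"
      using 1 2 3 ic ine by metis
  qed
qed

lemma rep_A:
  assumes w: "wend R \<omega> w = Some a" and f: "f \<in> Es R" "src R f = a"
  shows "AS (cls w) (cls (w @ [Ar f])) f" "AS (cls (w @ [Ar f])) (cls w) (rv R f)"
proof -
  have ws: "wend R \<omega> (w @ [Ar f]) = Some (tgt R f)" using wend_snoc[OF w] f by simp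
  show "AS (cls w) (cls (w @ [Ar f])) f"
    unfolding AS_def
  proof (intro conjI allI impI)
    show "f \<in> Es R" using f(1) .
    show "\<exists>w'. wend R \<omega> w' \<noteq> None \<and> cls w = cls w'" using w by blast
    fix w' assume w'1: "wend R \<omega> w' \<noteq> None" and w'2: "cls w = cls w'"
    show "wend R \<omega> w' = Some (src R f)" using cls_facts(1)[OF _ w'2] w f by simp
    have "gd_eq R \<omega> (w @ [Ar f]) (w' @ [Ar f])"
      using gd_cong[OF cls_gd[OF _ w'2]] w ws by simp
    then show "cls (w @ [Ar f]) = cls (w' @ [Ar f])" by (rule cls_eqI)
  qed
  show "AS (cls (w @ [Ar f])) (cls w) (rv R f)"
    unfolding AS_def
  proof (intro conjI allI impI)
    show "rv R f \<in> Es R" using E(1)[OF f(1)] .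
    show "\<exists>w'. wend R \<omega> w' \<noteq> None \<and> cls (w @ [Ar f]) = cls w'" using ws by blast
    fix w' assume w'1: "wend R \<omega> w' \<noteq> None" and w'2: "cls (w @ [Ar f]) = cls w'"
    show "wend R \<omega> w' = Some (src R (rv R f))" using cls_facts(1)[OF _ w'2] ws E[OF f(1)] by simp
    have "gd_eq R \<omega> ((w @ [Ar f]) @ [Ar (rv R f)]) (w' @ [Ar (rv R f)])"
      using gd_cong[OF cls_gd[OF _ w'2]] ws wend_snoc[OF ws] E[OF f(1)] by simp
    then have 1: "cls (w' @ [Ar (rv R f)]) = cls (w @ [Ar f, Ar (rv R f)])" using cls_eqI by simp
    have 2: "cls (w @ [Ar f, Ar (rv R f)]) = cls w" using cls_eqI[OF C_arr[OF w f]] .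
    show "cls w = cls (w' @ [Ar (rv R f)])" using 1 2 by simp
  qed
qed

lemma Xadj_cases:
  assumes "Xadj R \<omega> p q"
  shows "(\<exists>A X. FS p q A X) \<or> (\<exists>f. AS p q f)"
proof -
  obtain w a s where w: "wend R \<omega> w = Some a" and gs: "gen R a s"
    and pq: "(p = cls w \<and> q = cls (w @ [s])) \<or> (q = cls w \<and> p = cls (w @ [s]))"
    using assms unfolding Xadj_def by blast
  from gs show ?thesis unfolding gen_def
  proof (elim disjE exE conjE)
    fix e assume s: "s = Ar e" and e: "e \<in> Es R" "src R e = a"
    show ?thesis using rep_A[OF w e] pq s by blast
  next
    fix x g assume s: "s = El a x g" and x: "x \<in> GV R a" and g: "g \<in> carrier (Gfac R a x)" "g \<noteq> \<one>\<^bsub>Gfac R a x\<^esub>"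
    show ?thesis using rep_F[OF w x g] pq s by blast
  qed
qed

lemma Xadj_sym: "Xadj R \<omega> p q \<Longrightarrow> Xadj R \<omega> q p"
  unfolding Xadj_def by blast

lemma FS_rep:
  assumes "FS p q A X"
  obtains w g where "wend R \<omega> w = Some A" "p = cls w" "X \<in> GV R A" "g \<in> carrier (Gfac R A X)"
    "g \<noteq> \<one>\<^bsub>Gfac R A X\<^esub>" "q = cls (w @ [El A X g])"
  using assms unfolding FS_def by blast

lemma FS_sym: assumes "FS p q A X" shows "FS q p A X"
proof -
  obtain w g where "wend R \<omega> w = Some A" "p = cls w" "X \<in> GV R A" "g \<in> carrier (Gfac R A X)"
    "g \<noteq> \<one>\<^bsub>Gfac R A X\<^esub>" "q = cls (w @ [El A X g])"
    using FS_rep[OF assms] by metis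
  then show ?thesis using rep_F by metis
qed

lemma FS_at:
  assumes "FS p q A X" "wend R \<omega> w \<noteq> None" "p = cls w"
  obtains g where "wend R \<omega> w = Some A" "g \<in> carrier (Gfac R A X)"
    "g \<noteq> \<one>\<^bsub>Gfac R A X\<^esub>" "q = cls (w @ [El A X g])"
  using assms unfolding FS_def by blast

lemma AS_at:
  assumes "AS p q f" "wend R \<omega> w \<noteq> None" "p = cls w"
  shows "f \<in> Es R" "wend R \<omega> w = Some (src R f)" "q = cls (w @ [Ar f])"
  using assms unfolding AS_def by blast+

end
context rctx2 begin

lemma FS_GV: "FS p q A X \<Longrightarrow> X \<in> GV R A" unfolding FS_def by blast

lemma tri:
  assumes FSpq: "FS p q A X" and qr: "Xadj R \<omega> q r" and pr: "Xadj R \<omega> p r"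
  shows "FS q r A X \<and> FS p r A X"
proof -
  obtain wp g where wp: "wend R \<omega> wp = Some A" "p = cls wp" "X \<in> GV R A" "g \<in> carrier (Gfac R A X)"
    "g \<noteq> \<one>\<^bsub>Gfac R A X\<^esub>" "q = cls (wp @ [El A X g])"
    using FS_rep[OF FSpq] by metis
  have AV: "A \<in> Vs R" using wend_Vs[OF wp(1) omega] .
  let ?s1 = "El A X g"
  have wq: "wend R \<omega> (wp @ [?s1]) = Some A" using wend_snoc[OF wp(1)] wp(3,4) by simp
  from Xadj_cases[OF qr] show ?thesis
  proof (elim disjE exE)
    fix B Y assume FSqr: "FS q r B Y"
    obtain h where h: "wend R \<omega> (wp @ [?s1]) = Some B" "h \<in> carrier (Gfac R B Y)" "h \<noteq> \<one>\<^bsub>Gfac R B Y\<^esub>"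
      "r = cls ((wp @ [?s1]) @ [El B Y h])"
      using FS_at[OF FSqr _ wp(6)] wq by (metis option.distinct(1))
    have B: "B = A" using h(1) wq by simp
    have Y: "Y \<in> GV R A" using FS_GV[OF FSqr] B by simp
    have wu: "wend R \<omega> (wp @ [?s1, El A Y h]) \<noteq> None" using wend_snoc[OF wp(1)] wp(3,4) Y h(2) B by simp
    from Xadj_cases[OF pr] show ?thesis
    proof (elim disjE exE)
      fix C Z assume FSpr: "FS p r C Z"
      obtain k where k: "wend R \<omega> wp = Some C" "k \<in> carrier (Gfac R C Z)" "k \<noteq> \<one>\<^bsub>Gfac R C Z\<^esub>"
        "r = cls (wp @ [El C Z k])"
        using FS_at[OF FSpr _ wp(2)] wp(1) by (metis option.distinct(1))
      have C: "C = A" using k(1) wp(1) by simp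
      have Z: "Z \<in> GV R A" using FS_GV[OF FSpr] C by simp
      have c: "cls (wp @ [?s1, El A Y h]) = cls (wp @ [El A Z k])" using h(4) k(4) B C by simp
      have "\<forall>\<tau>\<in>St A. F [?s1, El A Y h] \<tau> = F [El A Z k] \<tau>" using loc_eq(1)[OF wp(1) wu c] .
      then have "\<forall>\<tau>\<in>St A. act (El A Y h) (act ?s1 \<tau>) = act (El A Z k) \<tau>" by simp
      then have "Y = X \<and> Z = X" using L1[OF AV wp(3) Y Z wp(4,5)] h(2,3) k(2,3) B C by blast
      then show ?thesis using FSqr FSpr B C by simp
    next
      fix f assume ASpr: "AS p r f"
      have r: "r = cls (wp @ [Ar f])" using AS_at(3)[OF ASpr _ wp(2)] wp(1) by simp
      have c: "cls (wp @ [?s1, El A Y h]) = cls (wp @ [Ar f])" using h(4) r B by simp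
      have "even (narr [?s1, El A Y h]) = even (narr [Ar f])" using loc_eq(3)[OF wp(1) wu c] .
      then show ?thesis by simp
    qed
  next
    fix f assume ASqr: "AS q r f"
    have f: "f \<in> Es R" "wend R \<omega> (wp @ [?s1]) = Some (src R f)" "r = cls ((wp @ [?s1]) @ [Ar f])"
      using AS_at[OF ASqr _ wp(6)] wq by auto
    have sf: "src R f = A" using f(2) wq by simp
    have wu: "wend R \<omega> (wp @ [?s1, Ar f]) \<noteq> None" using wend_snoc[OF wp(1)] wp(3,4) f(1) sf by simp
    from Xadj_cases[OF pr] show ?thesis
    proof (elim disjE exE)
      fix C Z assume FSpr: "FS p r C Z"
      obtain k where k: "wend R \<omega> wp = Some C" "r = cls (wp @ [El C Z k])"
        using FS_at[OF FSpr _ wp(2)] wp(1) by (metis option.distinct(1))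
      have c: "cls (wp @ [?s1, Ar f]) = cls (wp @ [El C Z k])" using f(3) k(2) by simp
      have "even (narr [?s1, Ar f]) = even (narr [El C Z k])" using loc_eq(3)[OF wp(1) wu c] .
      then show ?thesis by simp
    next
      fix f' assume ASpr: "AS p r f'"
      have f': "f' \<in> Es R" "r = cls (wp @ [Ar f'])" using AS_at[OF ASpr _ wp(2)] wp(1) by auto
      have c: "cls (wp @ [?s1, Ar f]) = cls (wp @ [Ar f'])" using f(3) f'(2) by simp
      have "cnt [?s1, Ar f] = cnt [Ar f']" using loc_eq(2)[OF wp(1) wu c] .
      then have "dlt f = dlt f'" by (simp add: fun_eq_iff)
      then have ff: "f' = f" using dlt_eq[OF f(1) f'(1)] by simp
      have H: "\<forall>\<tau>\<in>St A. F [?s1, Ar f] \<tau> = F [Ar f'] \<tau>" using loc_eq(1)[OF wp(1) wu c] .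
      let ?t0 = "([], X, \<one>\<^bsub>Gfac R A X\<^esub>) :: 'e list \<times> 'x \<times> 'g"
      have t0: "?t0 \<in> St (src R f)" using St_base[OF AV wp(3) one_c[OF AV wp(3)]] sf by simp
      have t1: "([], X, g) \<in> St (src R f)" using St_base[OF AV wp(3) wp(4)] sf by simp
      have "act (Ar f) ([], X, g) = act (Ar f) ?t0"
        using H t0 act_one_base[OF AV wp(3) wp(4)] ff sf by (metis F_simps(1,2) comp_apply id_apply)
      then have "act (Ar (rv R f)) (act (Ar f) ([], X, g)) = act (Ar (rv R f)) (act (Ar f) ?t0)" by simp
      then have "([], X, g) = ?t0" using rel_inv[OF f(1) t0] rel_inv[OF f(1) t1] by simp
      then show ?thesis using wp(5) by simp
    qed
  qed
qed

end
context rctx2 begin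

lemma Xadj_I:
  assumes "wend R \<omega> w = Some A" "X \<in> GV R A" "g \<in> carrier (Gfac R A X)" "g \<noteq> \<one>\<^bsub>Gfac R A X\<^esub>"
  shows "Xadj R \<omega> (cls w) (cls (w @ [El A X g]))"
  unfolding Xadj_def gen_def using assms by blast

lemma merge_cases:
  assumes w: "wend R \<omega> w = Some A" and X: "X \<in> GV R A" and g: "g \<in> carrier (Gfac R A X)"
    and h: "h \<in> carrier (Gfac R A X)"
  shows "cls (w @ [El A X g, El A X h]) = cls w \<or> Xadj R \<omega> (cls w) (cls (w @ [El A X g, El A X h]))"
proof -
  have AV: "A \<in> Vs R" using wend_Vs[OF w omega] .
  have gh: "g \<otimes>\<^bsub>Gfac R A X\<^esub> h \<in> carrier (Gfac R A X)"
    using grpG[OF AV X] g h by (simp add: group.is_monoid monoid.m_closed)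
  have 1: "cls (w @ [El A X g, El A X h]) = cls (w @ [El A X (g \<otimes>\<^bsub>Gfac R A X\<^esub> h)])"
    using cls_eqI[OF C_merge[OF w X g h AV]] .
  show ?thesis
  proof (cases "g \<otimes>\<^bsub>Gfac R A X\<^esub> h = \<one>\<^bsub>Gfac R A X\<^esub>")
    case True
    then show ?thesis using 1 cls_eqI[OF C_one[OF w X AV]] by simp
  next
    case False
    then show ?thesis using 1 Xadj_I[OF w X gh] by simp
  qed
qed

lemma sq:
  assumes dist: "distinct [a,b,c,d]" and bc: "Xadj R \<omega> b c" and cd: "Xadj R \<omega> c d" and da: "Xadj R \<omega> d a"
    and nac: "\<not> Xadj R \<omega> a c" and nbd: "\<not> Xadj R \<omega> b d" and FSab: "FS a b A X"
  shows "\<exists>B Y. FS c d B Y \<and> (Tst R)\<^sup>*\<^sup>* (A, X) (B, Y)"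
proof -
  obtain wa g where wa: "wend R \<omega> wa = Some A" "a = cls wa" "X \<in> GV R A" "g \<in> carrier (Gfac R A X)"
    "g \<noteq> \<one>\<^bsub>Gfac R A X\<^esub>" "b = cls (wa @ [El A X g])"
    using FS_rep[OF FSab] by metis
  have AV: "A \<in> Vs R" using wend_Vs[OF wa(1) omega] .
  let ?s1 = "El A X g"
  have wb: "wend R \<omega> (wa @ [?s1]) = Some A" using wend_snoc[OF wa(1)] wa(3,4) by simp
  have wa0: "wend R \<omega> (wa @ []) \<noteq> None" using wa(1) by simp
  have ca: "a = cls (wa @ [])" using wa(2) by simp
  from Xadj_cases[OF bc] show ?thesis
  proof (elim disjE exE)
    fix A' X2 assume F2: "FS b c A' X2"
    obtain h where h: "wend R \<omega> (wa @ [?s1]) = Some A'" "h \<in> carrier (Gfac R A' X2)" "h \<noteq> \<one>\<^bsub>Gfac R A' X2\<^esub>"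
      "c = cls ((wa @ [?s1]) @ [El A' X2 h])"
      using FS_at[OF F2 _ wa(6)] wb by (metis option.distinct(1))
    have A': "A' = A" using h(1) wb by simp
    have X2: "X2 \<in> GV R A" using FS_GV[OF F2] A' by simp
    let ?s2 = "El A X2 h"
    have c: "c = cls (wa @ [?s1, ?s2])" using h(4) A' by simp
    have X2ne: "X2 \<noteq> X"
    proof
      assume e: "X2 = X"
      have "cls (wa @ [?s1, ?s2]) = cls wa \<or> Xadj R \<omega> (cls wa) (cls (wa @ [?s1, ?s2]))"
        using merge_cases[OF wa(1) wa(3) wa(4)] h(2) A' e by simp
      then show False using c wa(2) dist nac by auto
    qed
    have wc: "wend R \<omega> (wa @ [?s1, ?s2]) = Some A" using wend_snoc[OF wa(1)] wa(3,4) X2 h(2) A' by simp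
    from Xadj_cases[OF cd] show ?thesis
    proof (elim disjE exE)
      fix A'' X3 assume F3: "FS c d A'' X3"
      obtain k where k: "wend R \<omega> (wa @ [?s1, ?s2]) = Some A''" "k \<in> carrier (Gfac R A'' X3)"
        "d = cls ((wa @ [?s1, ?s2]) @ [El A'' X3 k])"
        using FS_at[OF F3 _ c] wc by (metis option.distinct(1))
      have A'': "A'' = A" using k(1) wc by simp
      have X3: "X3 \<in> GV R A" using FS_GV[OF F3] A'' by simp
      let ?s3 = "El A X3 k"
      let ?wd = "wa @ [?s1, ?s2, ?s3]"
      have d: "d = cls ?wd" using k(3) A'' by simp
      have wd: "wend R \<omega> ?wd = Some A" using wend_snoc[OF wc] X3 k(2) A'' by simp
      from Xadj_cases[OF da] show ?thesis
      proof (elim disjE exE)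
        fix A4 X4 assume F4: "FS d a A4 X4"
        obtain l where l: "wend R \<omega> ?wd = Some A4" "l \<in> carrier (Gfac R A4 X4)"
          "a = cls (?wd @ [El A4 X4 l])"
          using FS_at[OF F4 _ d] wd by (metis option.distinct(1))
        have A4: "A4 = A" using l(1) wd by simp
        have X4: "X4 \<in> GV R A" using FS_GV[OF F4] A4 by simp
        let ?s4 = "El A X4 l"
        have X4ne: "X4 \<noteq> X"
        proof
          assume e: "X4 = X"
          have "gd_eq R \<omega> wa (?wd @ [?s4])" using cls_gd[of wa] l(3) wa(1,2) A4 by simp
          then have "gd_eq R \<omega> (wa @ [?s1]) ((?wd @ [?s4]) @ [?s1])" by (rule gd_cong) (use wb in simp)
          then have b2: "b = cls (?wd @ [El A X l, El A X g])" using wa(6) cls_eqI e by simp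
          have "cls (?wd @ [El A X l, El A X g]) = cls ?wd \<or> Xadj R \<omega> (cls ?wd) (cls (?wd @ [El A X l, El A X g]))"
            using merge_cases[OF wd wa(3) _ wa(4)] l(2) A4 e by simp
          then show False using b2 d dist nbd Xadj_sym by auto
        qed
        have cc: "cls (wa @ []) = cls (wa @ [?s1, ?s2, ?s3, ?s4])" using ca l(3) A4 by simp
        have "\<forall>\<tau>\<in>St A. F [] \<tau> = F [?s1, ?s2, ?s3, ?s4] \<tau>" using loc_eq(1)[OF wa(1) wa0 cc] .
        then have "\<forall>\<tau>\<in>St A. act ?s4 (act ?s3 (act ?s2 (act ?s1 \<tau>))) = \<tau>" by simp
        then have "X3 = X" using L_sq1[OF AV wa(3) wa(4) wa(5) X2ne X4ne] by blast
        then show ?thesis using F3 A'' by blast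
      next
        fix f assume AS4: "AS d a f"
        have "a = cls (?wd @ [Ar f])" using AS_at(3)[OF AS4 _ d] wd by simp
        then have cc: "cls (wa @ []) = cls (wa @ [?s1, ?s2, ?s3, Ar f])" using ca by simp
        have "even (narr []) = even (narr [?s1, ?s2, ?s3, Ar f])" using loc_eq(3)[OF wa(1) wa0 cc] .
        then show ?thesis by simp
      qed
    next
      fix f assume AS3: "AS c d f"
      have f: "f \<in> Es R" "wend R \<omega> (wa @ [?s1, ?s2]) = Some (src R f)" "d = cls ((wa @ [?s1, ?s2]) @ [Ar f])"
        using AS_at[OF AS3 _ c] wc by auto
      have sf: "src R f = A" using f(2) wc by simp
      let ?wd = "wa @ [?s1, ?s2, Ar f]"
      have d: "d = cls ?wd" using f(3) by simp
      have wd: "wend R \<omega> ?wd = Some (tgt R f)" using wend_snoc[OF wc] f(1) sf by simp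
      from Xadj_cases[OF da] show ?thesis
      proof (elim disjE exE)
        fix B Y assume F4: "FS d a B Y"
        obtain l where l: "a = cls (?wd @ [El B Y l])"
          using FS_at[OF F4 _ d] wd by (metis option.distinct(1))
        then have cc: "cls (wa @ []) = cls (wa @ [?s1, ?s2, Ar f, El B Y l])" using ca by simp
        have "even (narr []) = even (narr [?s1, ?s2, Ar f, El B Y l])" using loc_eq(3)[OF wa(1) wa0 cc] .
        then show ?thesis by simp
      next
        fix f' assume AS4: "AS d a f'"
        have f': "f' \<in> Es R" "a = cls (?wd @ [Ar f'])" using AS_at[OF AS4 _ d] wd by auto
        then have cc: "cls (wa @ []) = cls (wa @ [?s1, ?s2, Ar f, Ar f'])" using ca by simp
        have "cnt [] = cnt [?s1, ?s2, Ar f, Ar f']" using loc_eq(2)[OF wa(1) wa0 cc] .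
        then have "\<And>x. dlt f x + dlt f' x = 0" by (simp add: fun_eq_iff)
        then have ff: "f' = rv R f" using dlt_neg[OF f(1) f'(1)] by blast
        have "a = cls ((wa @ [?s1, ?s2]) @ [Ar f, Ar (rv R f)])" using f'(2) ff by simp
        also have "\<dots> = cls (wa @ [?s1, ?s2])" using cls_eqI[OF C_arr[OF wc f(1) sf]] .
        finally show ?thesis using c dist by simp
      qed
    qed
  next
    fix f assume AS2: "AS b c f"
    have f: "f \<in> Es R" "wend R \<omega> (wa @ [?s1]) = Some (src R f)" "c = cls ((wa @ [?s1]) @ [Ar f])"
      using AS_at[OF AS2 _ wa(6)] wb by auto
    have sf: "src R f = A" using f(2) wb by simp
    let ?wc = "wa @ [?s1, Ar f]"
    have c: "c = cls ?wc" using f(3) by simp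
    have wc: "wend R \<omega> ?wc = Some (tgt R f)" using wend_snoc[OF wb] f(1) sf by simp
    from Xadj_cases[OF cd] show ?thesis
    proof (elim disjE exE)
      fix B Y assume F3: "FS c d B Y"
      obtain k where k: "wend R \<omega> ?wc = Some B" "k \<in> carrier (Gfac R B Y)" "d = cls (?wc @ [El B Y k])"
        using FS_at[OF F3 _ c] wc by (metis option.distinct(1))
      have B: "B = tgt R f" using k(1) wc by simp
      have Y: "Y \<in> GV R B" using FS_GV[OF F3] .
      let ?s3 = "El B Y k"
      let ?wd = "wa @ [?s1, Ar f, ?s3]"
      have d: "d = cls ?wd" using k(3) by simp
      have wd: "wend R \<omega> ?wd = Some B" using wend_snoc[OF wc] Y k(2) B by simp
      from Xadj_cases[OF da] show ?thesis
      proof (elim disjE exE)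
        fix C Z assume F4: "FS d a C Z"
        obtain l where l: "a = cls (?wd @ [El C Z l])"
          using FS_at[OF F4 _ d] wd by (metis option.distinct(1))
        then have cc: "cls (wa @ []) = cls (wa @ [?s1, Ar f, ?s3, El C Z l])" using ca by simp
        have "even (narr []) = even (narr [?s1, Ar f, ?s3, El C Z l])" using loc_eq(3)[OF wa(1) wa0 cc] .
        then show ?thesis by simp
      next
        fix f' assume AS4: "AS d a f'"
        have f': "f' \<in> Es R" "a = cls (?wd @ [Ar f'])" using AS_at[OF AS4 _ d] wd by auto
        then have cc: "cls (wa @ []) = cls (wa @ [?s1, Ar f, ?s3, Ar f'])" using ca by simp
        have "cnt [] = cnt [?s1, Ar f, ?s3, Ar f']" using loc_eq(2)[OF wa(1) wa0 cc] .
        then have "\<And>x. dlt f x + dlt f' x = 0" by (simp add: fun_eq_iff)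
        then have ff: "f' = rv R f" using dlt_neg[OF f(1) f'(1)] by blast
        have "\<forall>\<tau>\<in>St A. F [] \<tau> = F [?s1, Ar f, ?s3, Ar f'] \<tau>" using loc_eq(1)[OF wa(1) wa0 cc] .
        then have H: "\<forall>\<tau>\<in>St A. act (Ar (rv R f)) (act (El (tgt R f) Y k) (act (Ar f) (act ?s1 \<tau>))) = \<tau>"
          using ff B by simp
        obtain y where y: "y \<in> EV R f" "X = emb R f y" "Y = emb R (rv R f) y"
          using L_sq2[OF f(1) sf wa(3) wa(4) wa(5) _ _ H] Y k(2) B by blast
        have "Tst R (A, X) (B, Y)" unfolding Tst_def using f(1) y sf B by blast
        then show ?thesis using F3 by blast
      qed
    next
      fix f' assume AS3: "AS c d f'"
      have f': "f' \<in> Es R" "d = cls (?wc @ [Ar f'])" using AS_at[OF AS3 _ c] wc by auto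
      have "wend R \<omega> ?wc = Some (src R f')" using AS_at(2)[OF AS3 _ c] wc by simp
      then have wd: "wend R \<omega> (?wc @ [Ar f']) \<noteq> None" using wend_snoc[of \<omega> ?wc "src R f'" "[Ar f']"] f'(1) by simp
      from Xadj_cases[OF da] show ?thesis
      proof (elim disjE exE)
        fix C Z assume F4: "FS d a C Z"
        obtain l where l: "a = cls ((?wc @ [Ar f']) @ [El C Z l])"
          using FS_at[OF F4 wd f'(2)] by metis
        then have cc: "cls (wa @ []) = cls (wa @ [?s1, Ar f, Ar f', El C Z l])" using ca by simp
        have "cnt [] = cnt [?s1, Ar f, Ar f', El C Z l]" using loc_eq(2)[OF wa(1) wa0 cc] .
        then have "\<And>x. dlt f x + dlt f' x = 0" by (simp add: fun_eq_iff)
        then have ff: "f' = rv R f" using dlt_neg[OF f(1) f'(1)] by blast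
        have "d = cls ((wa @ [?s1]) @ [Ar f, Ar (rv R f)])" using f'(2) ff by simp
        also have "\<dots> = cls (wa @ [?s1])" using cls_eqI[OF C_arr[OF wb f(1) sf]] .
        finally show ?thesis using wa(6) dist by simp
      next
        fix f'' assume AS4: "AS d a f''"
        have "a = cls ((?wc @ [Ar f']) @ [Ar f''])" using AS_at(3)[OF AS4 wd f'(2)] .
        then have cc: "cls (wa @ []) = cls (wa @ [?s1, Ar f, Ar f', Ar f''])" using ca by simp
        have "even (narr []) = even (narr [?s1, Ar f, Ar f', Ar f''])" using loc_eq(3)[OF wa(1) wa0 cc] .
        then show ?thesis by simp
      qed
    qed
  qed
qed

end
context rctx2 begin

lemma FS_neq: assumes "FS p q A X" shows "p \<noteq> q"
proof
  assume pq: "p = q"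
  obtain wp g where wp: "wend R \<omega> wp = Some A" "p = cls wp" "X \<in> GV R A" "g \<in> carrier (Gfac R A X)"
    "g \<noteq> \<one>\<^bsub>Gfac R A X\<^esub>" "q = cls (wp @ [El A X g])"
    using FS_rep[OF assms] by metis
  have AV: "A \<in> Vs R" using wend_Vs[OF wp(1) omega] .
  have w0: "wend R \<omega> (wp @ []) \<noteq> None" using wp(1) by simp
  have cc: "cls (wp @ []) = cls (wp @ [El A X g])" using wp pq by simp
  have "\<forall>\<tau>\<in>St A. F [] \<tau> = F [El A X g] \<tau>" using loc_eq(1)[OF wp(1) w0 cc] .
  then have "([], X, \<one>\<^bsub>Gfac R A X\<^esub>) = act (El A X g) ([], X, \<one>\<^bsub>Gfac R A X\<^esub>)"
    using St_base[OF AV wp(3) one_c[OF AV wp(3)]] by (simp del: act.simps)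
  then show False using act_one_base[OF AV wp(3) wp(4)] wp(5) by simp
qed

lemma AS_neq: assumes "AS p q f" shows "p \<noteq> q"
proof
  assume pq: "p = q"
  obtain w where w: "wend R \<omega> w \<noteq> None" "p = cls w" using assms unfolding AS_def by blast
  have a: "f \<in> Es R" "wend R \<omega> w = Some (src R f)" "q = cls (w @ [Ar f])" using AS_at[OF assms w] by auto
  have w0: "wend R \<omega> (w @ []) \<noteq> None" using w by simp
  have cc: "cls (w @ []) = cls (w @ [Ar f])" using a w pq by simp
  have "even (narr []) = even (narr [Ar f])" using loc_eq(3)[OF a(2) w0 cc] .
  then show False by simp
qed

lemma Xadj_irrefl: assumes "Xadj R \<omega> p q" shows "p \<noteq> q"
proof -
  from Xadj_cases[OF assms] show ?thesis
  proof (elim disjE exE)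
    fix A X assume "FS p q A X" then show ?thesis by (rule FS_neq)
  next
    fix f assume "AS p q f" then show ?thesis by (rule AS_neq)
  qed
qed

lemma FS_uniq:
  assumes F1: "FS p q A X" and F2: "FS p q B Y"
  shows "A = B \<and> X = Y"
proof -
  obtain wp g where wp: "wend R \<omega> wp = Some A" "p = cls wp" "X \<in> GV R A" "g \<in> carrier (Gfac R A X)"
    "g \<noteq> \<one>\<^bsub>Gfac R A X\<^esub>" "q = cls (wp @ [El A X g])"
    using FS_rep[OF F1] by metis
  obtain h where h: "wend R \<omega> wp = Some B" "q = cls (wp @ [El B Y h])"
    using FS_at[OF F2 _ wp(2)] wp(1) by (metis option.distinct(1))
  have AB: "A = B" using wp(1) h(1) by simp
  have AV: "A \<in> Vs R" using wend_Vs[OF wp(1) omega] .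
  have wu: "wend R \<omega> (wp @ [El A X g]) \<noteq> None" using wend_snoc[OF wp(1)] wp(3,4) by simp
  have cc: "cls (wp @ [El A X g]) = cls (wp @ [El A Y h])" using wp(6) h(2) AB by simp
  have "\<forall>\<tau>\<in>St A. F [El A X g] \<tau> = F [El A Y h] \<tau>" using loc_eq(1)[OF wp(1) wu cc] .
  then have e: "act (El A X g) ([], X, \<one>\<^bsub>Gfac R A X\<^esub>) = act (El A Y h) ([], X, \<one>\<^bsub>Gfac R A X\<^esub>)"
    using St_base[OF AV wp(3) one_c[OF AV wp(3)]] by (simp del: act.simps)
  have "X = Y"
  proof (rule ccontr)
    assume "X \<noteq> Y"
    then have "act (El A Y h) ([], X, \<one>\<^bsub>Gfac R A X\<^esub>) = ([], X, \<one>\<^bsub>Gfac R A X\<^esub>)" by simp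
    then show False using e act_one_base[OF AV wp(3) wp(4)] wp(5) by simp
  qed
  then show ?thesis using AB by simp
qed

definition Inv where
  "Inv u x \<epsilon> \<longleftrightarrow> (\<exists>p q A X. \<epsilon> = {p,q} \<and> FS p q A X \<and> (Tst R)\<^sup>*\<^sup>* (u, x) (A, X))"

lemma hyp_step:
  assumes h: "(\<epsilon>1, \<epsilon>2) \<in> hyp_rel R \<omega>" and I: "Inv u x \<epsilon>1"
  shows "Inv u x \<epsilon>2"
proof -
  obtain p q A X where pq: "\<epsilon>1 = {p,q}" "FS p q A X" "(Tst R)\<^sup>*\<^sup>* (u, x) (A, X)"
    using I unfolding Inv_def by blast
  have pnq: "p \<noteq> q" using FS_neq[OF pq(2)] .
  have e2: "\<epsilon>2 \<in> Xedges R \<omega>" using h unfolding hyp_rel_def by simp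
  then obtain p2 q2 where p2: "\<epsilon>2 = {p2,q2}" "Xadj R \<omega> p2 q2" unfolding Xedges_def by blast
  have p2nq: "p2 \<noteq> q2" using Xadj_irrefl[OF p2(2)] .
  from h have "(\<exists>a b c. Xadj R \<omega> a b \<and> Xadj R \<omega> b c \<and> Xadj R \<omega> a c \<and> \<epsilon>1 \<subseteq> {a,b,c} \<and> \<epsilon>2 \<subseteq> {a,b,c})
    \<or> (\<exists>a b c d. distinct [a,b,c,d] \<and> Xadj R \<omega> a b \<and> Xadj R \<omega> b c \<and> Xadj R \<omega> c d \<and>
               Xadj R \<omega> d a \<and> \<not> Xadj R \<omega> a c \<and> \<not> Xadj R \<omega> b d \<and>
               {\<epsilon>1, \<epsilon>2} = {{a,b},{c,d}})"
    unfolding hyp_rel_def by simp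
  then show ?thesis
  proof (elim disjE exE conjE)
    fix a b c assume ab: "Xadj R \<omega> a b" and bc: "Xadj R \<omega> b c" and ac: "Xadj R \<omega> a c"
      and s1: "\<epsilon>1 \<subseteq> {a,b,c}" and s2: "\<epsilon>2 \<subseteq> {a,b,c}"
    have d: "a \<noteq> b" "b \<noteq> c" "a \<noteq> c" using Xadj_irrefl ab bc ac by auto
    have ba: "Xadj R \<omega> b a" and cb: "Xadj R \<omega> c b" and ca: "Xadj R \<omega> c a" using ab bc ac Xadj_sym by blast+
    have adj: "\<And>s t. s \<in> {a,b,c} \<Longrightarrow> t \<in> {a,b,c} \<Longrightarrow> s \<noteq> t \<Longrightarrow> Xadj R \<omega> s t"
      using ab bc ac ba cb ca by auto
    have pin: "p \<in> {a,b,c}" "q \<in> {a,b,c}" using s1 pq(1) by auto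
    define r where "r = (if a \<noteq> p \<and> a \<noteq> q then a else if b \<noteq> p \<and> b \<noteq> q then b else c)"
    have r: "r \<in> {a,b,c}" "r \<noteq> p" "r \<noteq> q" "{a,b,c} \<subseteq> {p,q,r}"
      using pin pnq d unfolding r_def by auto
    have t: "FS q r A X \<and> FS p r A X" using tri[OF pq(2) adj[OF pin(2) r(1)] adj[OF pin(1) r(1)]] r by auto
    have "p2 \<in> {p,q,r}" "q2 \<in> {p,q,r}" using s2 p2(1) r(4) by auto
    then have "\<epsilon>2 = {p,q} \<or> \<epsilon>2 = {q,r} \<or> \<epsilon>2 = {p,r}" using p2(1) p2nq by auto
    then show ?thesis unfolding Inv_def using pq t by blast
  next
    fix a b c d assume dist: "distinct [a,b,c,d]" and ab: "Xadj R \<omega> a b" and bc: "Xadj R \<omega> b c"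
      and cd: "Xadj R \<omega> c d" and da: "Xadj R \<omega> d a" and nac: "\<not> Xadj R \<omega> a c" and nbd: "\<not> Xadj R \<omega> b d"
      and ee: "{\<epsilon>1, \<epsilon>2} = {{a,b},{c,d}}"
    show ?thesis
    proof (cases "\<epsilon>1 = \<epsilon>2")
      case True
      then show ?thesis using I by simp
    next
      case False
      then have "(\<epsilon>1 = {a,b} \<and> \<epsilon>2 = {c,d}) \<or> (\<epsilon>1 = {c,d} \<and> \<epsilon>2 = {a,b})"
        using ee by (metis doubleton_eq_iff)
      then show ?thesis
      proof (elim disjE conjE)
        assume e1: "\<epsilon>1 = {a,b}" and e2: "\<epsilon>2 = {c,d}"
        have "FS a b A X" using pq e1 FS_sym by (metis doubleton_eq_iff)
        then obtain B Y where "FS c d B Y" "(Tst R)\<^sup>*\<^sup>* (A, X) (B, Y)"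
          using sq[OF dist bc cd da nac nbd] by blast
        moreover have "(Tst R)\<^sup>*\<^sup>* (u, x) (B, Y)" using pq(3) calculation(2) by (rule rtranclp_trans)
        ultimately show ?thesis unfolding Inv_def using e2 by blast
      next
        assume e1: "\<epsilon>1 = {c,d}" and e2: "\<epsilon>2 = {a,b}"
        have "FS c d A X" using pq e1 FS_sym by (metis doubleton_eq_iff)
        moreover have "distinct [c,d,a,b]" using dist by auto
        ultimately obtain B Y where "FS a b B Y" "(Tst R)\<^sup>*\<^sup>* (A, X) (B, Y)"
          using sq[of c d a b] da ab bc nac nbd Xadj_sym by blast
        moreover have "(Tst R)\<^sup>*\<^sup>* (u, x) (B, Y)" using pq(3) calculation(2) by (rule rtranclp_trans)
        ultimately show ?thesis unfolding Inv_def using e2 by blast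
      qed
    qed
  qed
qed

lemma label_FS:
  assumes "edge_factor_label R \<omega> \<epsilon> u x"
  shows "\<exists>p q. \<epsilon> = {p,q} \<and> FS p q u x"
proof -
  obtain w g where w: "wend R \<omega> w = Some u" "x \<in> GV R u" "g \<in> carrier (Gfac R u x)"
    "g \<noteq> \<one>\<^bsub>Gfac R u x\<^esub>" "\<epsilon> = {cls w, cls (w @ [El u x g])}"
    using assms unfolding edge_factor_label_def by blast
  have "FS (cls w) (cls (w @ [El u x g])) u x" using rep_F(1)[OF w(1-4)] .
  then show ?thesis using w(5) by blast
qed

lemma main:
  assumes l1: "edge_factor_label R \<omega> \<epsilon> u x" and l2: "edge_factor_label R \<omega> \<epsilon>' v y"
    and sh: "same_hyperplane R \<omega> \<epsilon> \<epsilon>'"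
  shows "(Tst R)\<^sup>*\<^sup>* (u, x) (v, y)"
proof -
  have I0: "Inv u x \<epsilon>" using label_FS[OF l1] unfolding Inv_def by blast
  have "(\<epsilon>, \<epsilon>') \<in> (hyp_rel R \<omega>)\<^sup>*" using sh unfolding same_hyperplane_def .
  then have I: "Inv u x \<epsilon>'"
  proof (induction rule: rtrancl_induct)
    case base
    then show ?case using I0 .
  next
    case (step y z)
    then show ?case using hyp_step by blast
  qed
  obtain p q A X where pq: "\<epsilon>' = {p,q}" "FS p q A X" "(Tst R)\<^sup>*\<^sup>* (u, x) (A, X)"
    using I unfolding Inv_def by blast
  obtain p' q' where pq': "\<epsilon>' = {p',q'}" "FS p' q' v y" using label_FS[OF l2] by blast
  have "FS p q v y" using pq'(2) pq(1) pq'(1) FS_sym by (metis doubleton_eq_iff)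
  then have "A = v \<and> X = y" using FS_uniq[OF pq(2)] by blast
  then show ?thesis using pq(3) by simp
qed

end

theorem lemma4p10:
  fixes R :: "('v,'e,'x,'y,'g) rag" and \<omega> :: 'v
  assumes "rag_gog R" and "\<omega> \<in> Vs R"
    and "edge_factor_label R \<omega> \<epsilon> u x"
    and "edge_factor_label R \<omega> \<epsilon>' v y"
    and "same_hyperplane R \<omega> \<epsilon> \<epsilon>'"
  shows "\<exists>\<gamma>. opath R u \<gamma> v \<and> phi_path R \<gamma> (Afac R u x) = Afac R v y"
proof -
  interpret rctx2 R \<omega>
    by unfold_locales (use assms in auto)
  have "(Tst R)\<^sup>*\<^sup>* (u, x) (v, y)" using main[OF assms(3-5)] .
  then show ?thesis by (rule Tst_path)
qed

end
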